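(* Let $a\in\mathbb D$, $b=-a$, and $z=(0,\gamma)$ with $|a|^2<|\gamma|\le|a|^{3/2}$. For $\varepsilon\in\mathbb C\setminus\{0\}$ let $L^\varepsilon_{aVbV}$ be Coman's Lempert function on $\mathbb D^2$ with the four poles $(a,0),(b,0),(b,\varepsilon),(a,\varepsilon)$, all of weight $1$. Then $$\limsup_{\varepsilon\to0}L^\varepsilon_{aVbV}(z)<\min\{L_{a0b0}(z),L_{aVb0}(z),L_{a0bV}(z),L_{aVbV}(z)\}.$$
   Context: $\mathbb D$ is the open unit disc; maps $\varphi=(\varphi_1,\varphi_2)$ are holomorphic $\mathbb D\to\mathbb D^2$, $\zeta_j\in\mathbb D$. Coman's Lempert function with poles $p_1,\dots,p_k$ of weight 1: $\inf\{\sum_j\log|\zeta_j|:\varphi(0)=z,\varphi(\zeta_j)=p_j\}$. All of the following are infima over $\varphi$ with $\varphi(0)=z$, $\varphi(\zeta_1)=(a,0)$, $\varphi(\zeta_2)=(b,0)$: $L_{a0b0}(z)=\inf(\log|\zeta_1|+\log|\zeta_2|)$; $L_{a0bV}(z)=\inf(\log|\zeta_1|+2\log|\zeta_2|)$ with additionally $\varphi_1'(\zeta_2)=0$; $L_{aVb0}(z)=\inf(2\log|\zeta_1|+\log|\zeta_2|)$ with additionally $\varphi_1'(\zeta_1)=0$; $L_{aVbV}(z)=\inf(2\log|\zeta_1|+2\log|\zeta_2|)$ with additionally $\varphi_1'(\zeta_1)=\varphi_1'(\zeta_2)=0$. *)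

theory Defs
  imports "HOL-Analysis.Analysis"
begin

definition logabs :: "complex \<Rightarrow> ereal" where
  "logabs w = (if w = 0 then -\<infinity> else ereal (ln (cmod w)))"

definition disc_map :: "(complex \<Rightarrow> complex) \<Rightarrow> (complex \<Rightarrow> complex) \<Rightarrow> bool" where
  "disc_map f g \<longleftrightarrow> f holomorphic_on ball 0 1 \<and> g holomorphic_on ball 0 1 \<and>
     f ` ball 0 1 \<subseteq> ball 0 1 \<and> g ` ball 0 1 \<subseteq> ball 0 1"

definition coman_lempert :: "(complex \<times> complex) list \<Rightarrow> complex \<times> complex \<Rightarrow> ereal" where
  "coman_lempert ps z = Inf {sum_list (map logabs zs) | f g zs.
      disc_map f g \<and> (f 0, g 0) = z \<and> length zs = length ps \<and>
      (\<forall>j < length ps. zs ! j \<in> ball 0 1 \<and> (f (zs ! j), g (zs ! j)) = ps ! j)}"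

definition L_a0b0 :: "complex \<Rightarrow> complex \<Rightarrow> complex \<times> complex \<Rightarrow> ereal" where
  "L_a0b0 a b z = Inf {logabs z1 + logabs z2 | f g z1 z2.
      disc_map f g \<and> (f 0, g 0) = z \<and> z1 \<in> ball 0 1 \<and> z2 \<in> ball 0 1 \<and>
      (f z1, g z1) = (a, 0) \<and> (f z2, g z2) = (b, 0)}"

definition L_a0bV :: "complex \<Rightarrow> complex \<Rightarrow> complex \<times> complex \<Rightarrow> ereal" where
  "L_a0bV a b z = Inf {logabs z1 + 2 * logabs z2 | f g z1 z2.
      disc_map f g \<and> (f 0, g 0) = z \<and> z1 \<in> ball 0 1 \<and> z2 \<in> ball 0 1 \<and>
      (f z1, g z1) = (a, 0) \<and> (f z2, g z2) = (b, 0) \<and> deriv f z2 = 0}"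

definition L_aVb0 :: "complex \<Rightarrow> complex \<Rightarrow> complex \<times> complex \<Rightarrow> ereal" where
  "L_aVb0 a b z = Inf {2 * logabs z1 + logabs z2 | f g z1 z2.
      disc_map f g \<and> (f 0, g 0) = z \<and> z1 \<in> ball 0 1 \<and> z2 \<in> ball 0 1 \<and>
      (f z1, g z1) = (a, 0) \<and> (f z2, g z2) = (b, 0) \<and> deriv f z1 = 0}"

definition L_aVbV :: "complex \<Rightarrow> complex \<Rightarrow> complex \<times> complex \<Rightarrow> ereal" where
  "L_aVbV a b z = Inf {2 * logabs z1 + 2 * logabs z2 | f g z1 z2.
      disc_map f g \<and> (f 0, g 0) = z \<and> z1 \<in> ball 0 1 \<and> z2 \<in> ball 0 1 \<and>
      (f z1, g z1) = (a, 0) \<and> (f z2, g z2) = (b, 0) \<and> deriv f z1 = 0 \<and> deriv f z2 = 0}"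

end

theory Submission
  imports Defs "HOL-Complex_Analysis.Complex_Analysis"
begin


definition mob :: "complex \<Rightarrow> complex \<Rightarrow> complex" where
  "mob w z = (z - w) / (1 - cnj w * z)"

lemma mob_Moeb: "mob w z = Moebius_function 0 w z"
  by (simp add: mob_def Moebius_function_simple)

lemma mob_denom: "norm w < 1 \<Longrightarrow> norm z < 1 \<Longrightarrow> 1 - cnj w * z \<noteq> 0"
proof
  assume "norm w < 1" "norm z < 1" "1 - cnj w * z = 0"
  then have "norm (cnj w * z) = 1" by (metis eq_iff_diff_eq_0 norm_one)
  moreover have "norm w * norm z \<le> norm w * 1"
    using \<open>norm z < 1\<close> by (intro mult_left_mono) auto
  then have "norm (cnj w * z) < 1"
    using \<open>norm w < 1\<close> by (simp add: norm_mult)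
  ultimately show False by simp
qed

lemma mob_norm_lt1: "norm w < 1 \<Longrightarrow> norm z < 1 \<Longrightarrow> norm (mob w z) < 1"
  by (simp add: mob_Moeb Moebius_function_norm_lt_1)

lemma mob_inv1: "norm w < 1 \<Longrightarrow> norm z < 1 \<Longrightarrow> mob w (mob (-w) z) = z"
  unfolding mob_Moeb by (rule Moebius_function_compose) auto

lemma mob_inv2: "norm w < 1 \<Longrightarrow> norm z < 1 \<Longrightarrow> mob (-w) (mob w z) = z"
  unfolding mob_Moeb by (rule Moebius_function_compose) auto

lemma mob_hol: "norm w < 1 \<Longrightarrow> mob w holomorphic_on ball 0 1"
  unfolding mob_Moeb[abs_def] by (rule Moebius_function_holomorphic)

lemma mob_self[simp]: "mob w w = 0" by (simp add: mob_def)
lemma mob_at0[simp]: "mob w 0 = - w" by (simp add: mob_def)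
lemma mob_0w[simp]: "mob 0 z = z" by (simp add: mob_def)

lemma mob_eq0: "norm w < 1 \<Longrightarrow> norm z < 1 \<Longrightarrow> mob w z = 0 \<longleftrightarrow> z = w"
  using mob_denom by (auto simp: mob_def)

lemma mob_ball: "norm w < 1 \<Longrightarrow> mob w ` ball 0 1 \<subseteq> ball 0 1"
  using mob_norm_lt1 by auto

lemma norm_1_cnj_sym: "norm (1 - cnj w * z) = norm (1 - cnj z * w)"
proof -
  have "1 - cnj z * w = cnj (1 - cnj w * z)" by simp
  then show ?thesis by (metis complex_mod_cnj)
qed

lemma mob_norm_sym: "norm (mob w z) = norm (mob z w)"
  by (simp add: mob_def norm_divide norm_1_cnj_sym norm_minus_commute)

lemma mob_identity:
  assumes "norm w < 1" "norm z < 1"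
  shows "1 - (norm (mob w z))\<^sup>2 = (1 - (norm w)\<^sup>2) * (1 - (norm z)\<^sup>2) / (norm (1 - cnj w * z))\<^sup>2"
proof -
  have d: "1 - cnj w * z \<noteq> 0" using mob_denom assms by blast
  have key: "(norm (1 - cnj w * z))\<^sup>2 - (norm (z - w))\<^sup>2 = (1 - (norm w)\<^sup>2) * (1 - (norm z)\<^sup>2)"
    by (simp only: cmod_power2) (simp add: power2_eq_square algebra_simps)
  have "(norm (mob w z))\<^sup>2 = (norm (z - w))\<^sup>2 / (norm (1 - cnj w * z))\<^sup>2"
    by (simp add: mob_def norm_divide power_divide)
  then show ?thesis using d key by (simp add: field_simps)
qed

lemma mob_deriv:
  assumes "norm w < 1" "norm z < 1"
  shows "(mob w has_field_derivative (1 - cnj w * w) / (1 - cnj w * z)\<^sup>2) (at z)"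
proof -
  have d: "1 - cnj w * z \<noteq> 0" using mob_denom assms by blast
  have "((\<lambda>z. (z - w) / (1 - cnj w * z)) has_field_derivative
          (1 - cnj w * w) / (1 - cnj w * z)\<^sup>2) (at z)"
    using d by (auto intro!: derivative_eq_intros simp: field_simps power2_eq_square)
  then show ?thesis by (simp add: mob_def[abs_def])
qed

lemma mob_deriv_self_ne0:
  assumes "norm w < 1" shows "(1 - cnj w * w) \<noteq> 0"
  using mob_denom[OF assms assms] .



lemma hol_le1_dichot:
  assumes hol: "j holomorphic_on ball 0 1" and le: "\<forall>z\<in>ball 0 1. norm (j z) \<le> 1"
  shows "(\<forall>z\<in>ball 0 1. norm (j z) < 1) \<or> (\<exists>c. norm c = 1 \<and> (\<forall>z\<in>ball 0 1. j z = c))"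
proof (cases "\<exists>\<xi>\<in>ball 0 1. norm (j \<xi>) = 1")
  case True
  then obtain \<xi> where \<xi>: "\<xi> \<in> ball 0 1" "norm (j \<xi>) = 1" by blast
  have "j constant_on ball 0 1"
    by (rule maximum_modulus_principle[OF hol open_ball connected_ball open_ball order_refl \<xi>(1)])
       (use le \<xi> in auto)
  then obtain c where c: "\<forall>z\<in>ball 0 1. j z = c" by (auto simp: constant_on_def)
  then show ?thesis using \<xi> by force
next
  case False
  then show ?thesis using le by (meson less_le)
qed

lemma schwarz_le:
  assumes hol: "k holomorphic_on ball 0 1" and le: "\<forall>z\<in>ball 0 1. norm (k z) \<le> 1" and k0: "k 0 = 0"
  shows "\<forall>z\<in>ball 0 1. norm (k z) \<le> norm z" "norm (deriv k 0) \<le> 1"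
proof -
  have lt: "\<forall>z\<in>ball 0 1. norm (k z) < 1"
    using hol_le1_dichot[OF hol le] k0 by force
  show "\<forall>z\<in>ball 0 1. norm (k z) \<le> norm z"
    using Schwarz_Lemma(1)[OF hol k0] lt by auto
  show "norm (deriv k 0) \<le> 1"
  proof -
    have "\<And>z. norm z < 1 \<Longrightarrow> norm (k z) < 1" using lt by auto
    from Schwarz_Lemma(2)[OF hol k0 this, of 0] show ?thesis by simp
  qed
qed

lemma factor1:
  assumes hol: "h holomorphic_on ball 0 1" and le: "\<forall>z\<in>ball 0 1. norm (h z) \<le> 1"
    and p: "norm p < 1" and hp: "h p = 0"
  obtains j where "j holomorphic_on ball 0 1" "\<forall>z\<in>ball 0 1. norm (j z) \<le> 1"
    "\<forall>z\<in>ball 0 1. h z = mob p z * j z"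
proof -
  have mp: "norm (-p) < 1" using p by simp
  define k where "k = h \<circ> mob (-p)"
  have holk: "k holomorphic_on ball 0 1"
    unfolding k_def by (rule holomorphic_on_compose_gen[OF mob_hol[OF mp] hol mob_ball[OF mp]])
  have k0: "k 0 = 0" using hp by (simp add: k_def)
  have lek: "\<forall>z\<in>ball 0 1. norm (k z) \<le> 1"
    using le mob_norm_lt1[OF mp] by (auto simp: k_def)
  obtain l where holl: "l holomorphic_on ball 0 1" and kl: "\<And>z. norm z < 1 \<Longrightarrow> k z = z * l z"
      and dl: "deriv k 0 = l 0"
    using Schwarz3[OF holk k0] by blast
  note S = schwarz_le[OF holk lek k0]
  have lel: "norm (l w) \<le> 1" if "norm w < 1" for w
  proof (cases "w = 0")
    case True then show ?thesis using S(2) dl by simp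
  next
    case False
    have "norm (k w) \<le> norm w" using S(1) that by auto
    then have "norm w * norm (l w) \<le> norm w * 1"
      using kl[OF that] by (simp add: norm_mult)
    then show ?thesis using False by simp
  qed
  define j where "j = l \<circ> mob p"
  show ?thesis
  proof
    show "j holomorphic_on ball 0 1"
      unfolding j_def by (rule holomorphic_on_compose_gen[OF mob_hol[OF p] holl mob_ball[OF p]])
    show "\<forall>z\<in>ball 0 1. norm (j z) \<le> 1"
      using lel mob_norm_lt1[OF p] by (auto simp: j_def)
    show "\<forall>z\<in>ball 0 1. h z = mob p z * j z"
    proof
      fix z :: complex assume z: "z \<in> ball 0 1"
      have mz: "norm (mob p z) < 1" using mob_norm_lt1[OF p] z by simp
      have "h z = h (mob (-p) (mob p z))" using mob_inv2[OF p] z by simp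
      also have "\<dots> = k (mob p z)" by (simp add: k_def)
      also have "\<dots> = mob p z * j z" using kl[OF mz] by (simp add: j_def)
      finally show "h z = mob p z * j z" .
    qed
  qed
qed

lemma deriv_mob_prod:
  assumes holj: "j holomorphic_on ball 0 1" and p: "norm p < 1" and q: "norm q < 1"
    and eq: "\<forall>z\<in>ball 0 1. h z = mob p z * j z"
  shows "(h has_field_derivative
           (mob p q * deriv j q + (1 - cnj p * p) / (1 - cnj p * q)\<^sup>2 * j q)) (at q)"
proof -
  have "((\<lambda>z. mob p z * j z) has_field_derivative
           (mob p q * deriv j q + (1 - cnj p * p) / (1 - cnj p * q)\<^sup>2 * j q)) (at q)"
    using DERIV_mult[OF mob_deriv[OF p q] holomorphic_derivI[OF holj open_ball, of q]] q
    by (simp add: algebra_simps)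
  then show ?thesis
    by (rule has_field_derivative_transform_within_open[OF _ open_ball[of 0 1]]) (use q eq in auto)
qed

lemma factor2:
  assumes hol: "h holomorphic_on ball 0 1" and le: "\<forall>z\<in>ball 0 1. norm (h z) \<le> 1"
    and p: "norm p < 1" and hp: "h p = 0" and dh: "deriv h p = 0"
  obtains j where "j holomorphic_on ball 0 1" "\<forall>z\<in>ball 0 1. norm (j z) \<le> 1"
    "\<forall>z\<in>ball 0 1. h z = (mob p z)\<^sup>2 * j z"
proof -
  obtain j1 where h1: "j1 holomorphic_on ball 0 1" "\<forall>z\<in>ball 0 1. norm (j1 z) \<le> 1"
    "\<forall>z\<in>ball 0 1. h z = mob p z * j1 z"
    using factor1[OF hol le p hp] by blast
  have D: "(h has_field_derivative ((1 - cnj p * p) / (1 - cnj p * p)\<^sup>2 * j1 p)) (at p)"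
    using deriv_mob_prod[OF h1(1) p p h1(3)] by simp
  have "(1 - cnj p * p) / (1 - cnj p * p)\<^sup>2 * j1 p = 0"
    using DERIV_imp_deriv[OF D] dh by simp
  then have j1p: "j1 p = 0" using mob_deriv_self_ne0[OF p] by (simp add: power2_eq_square)
  obtain j where h2: "j holomorphic_on ball 0 1" "\<forall>z\<in>ball 0 1. norm (j z) \<le> 1"
    "\<forall>z\<in>ball 0 1. j1 z = mob p z * j z"
    using factor1[OF h1(1) h1(2) p j1p] by blast
  show ?thesis
    by (rule that[OF h2(1) h2(2)]) (use h1(3) h2(3) in \<open>simp add: power2_eq_square\<close>)
qed

lemma two_zeros:
  assumes hol: "g holomorphic_on ball 0 1" and le: "\<forall>z\<in>ball 0 1. norm (g z) \<le> 1"
    and p: "norm p < 1" and q: "norm q < 1" and gp: "g p = 0" and gq: "g q = 0" and pq: "p \<noteq> q"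
  shows "norm (g 0) \<le> norm p * norm q"
proof -
  obtain j where j: "j holomorphic_on ball 0 1" "\<forall>z\<in>ball 0 1. norm (j z) \<le> 1"
    "\<forall>z\<in>ball 0 1. g z = mob p z * j z"
    using factor1[OF hol le p gp] by blast
  have "mob p q \<noteq> 0" using mob_eq0[OF p q] pq by simp
  then have jq: "j q = 0" using j(3) q gq by auto
  obtain l where l: "l holomorphic_on ball 0 1" "\<forall>z\<in>ball 0 1. norm (l z) \<le> 1"
    "\<forall>z\<in>ball 0 1. j z = mob q z * l z"
    using factor1[OF j(1) j(2) q jq] by blast
  have "g 0 = (-p) * ((-q) * l 0)" using j(3) l(3) by simp
  then have "norm (g 0) = norm p * norm q * norm (l 0)" by (simp add: norm_mult)
  also have "\<dots> \<le> norm p * norm q * 1"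
    using l(2) by (intro mult_left_mono) auto
  finally show ?thesis by simp
qed

lemma SPmod:
  assumes hol: "j holomorphic_on ball 0 1" and lt: "\<forall>z\<in>ball 0 1. norm (j z) < 1"
    and z: "norm z < 1" and w: "norm w < 1"
  shows "norm (mob (j z) (j w)) \<le> norm (mob z w)"
proof -
  have jz: "norm (j z) < 1" using lt z by simp
  define k where "k = mob (j z) \<circ> j"
  have holk: "k holomorphic_on ball 0 1"
    unfolding k_def by (rule holomorphic_on_compose_gen[OF hol mob_hol[OF jz]]) (use lt in auto)
  have lek: "\<forall>x\<in>ball 0 1. norm (k x) \<le> 1"
    using lt mob_norm_lt1[OF jz] by (auto simp: k_def less_imp_le)
  have kz: "k z = 0" by (simp add: k_def)
  obtain l where l: "l holomorphic_on ball 0 1" "\<forall>z\<in>ball 0 1. norm (l z) \<le> 1"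
    "\<forall>x\<in>ball 0 1. k x = mob z x * l x"
    using factor1[OF holk lek z kz] by blast
  have "norm (k w) = norm (mob z w) * norm (l w)" using l(3) w by (simp add: norm_mult)
  also have "\<dots> \<le> norm (mob z w) * 1" using l(2) w by (intro mult_left_mono) auto
  finally show ?thesis by (simp add: k_def)
qed

lemma SPD:
  assumes hol: "j holomorphic_on ball 0 1" and lt: "\<forall>z\<in>ball 0 1. norm (j z) < 1"
    and q: "norm q < 1"
  shows "norm (deriv j q) * (1 - (norm q)\<^sup>2) \<le> 1 - (norm (j q))\<^sup>2"
proof -
  have jq: "norm (j q) < 1" using lt q by simp
  define k where "k = mob (j q) \<circ> j"
  have holk: "k holomorphic_on ball 0 1"
    unfolding k_def by (rule holomorphic_on_compose_gen[OF hol mob_hol[OF jq]]) (use lt in auto)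
  have lek: "\<forall>x\<in>ball 0 1. norm (k x) \<le> 1"
    using lt mob_norm_lt1[OF jq] by (auto simp: k_def less_imp_le)
  have kq: "k q = 0" by (simp add: k_def)
  obtain l where l: "l holomorphic_on ball 0 1" "\<forall>z\<in>ball 0 1. norm (l z) \<le> 1"
    "\<forall>x\<in>ball 0 1. k x = mob q x * l x"
    using factor1[OF holk lek q kq] by blast
  have D1: "(k has_field_derivative ((1 - cnj q * q) / (1 - cnj q * q)\<^sup>2 * l q)) (at q)"
    using deriv_mob_prod[OF l(1) q q l(3)] by simp
  have D2: "(k has_field_derivative ((1 - cnj (j q) * j q) / (1 - cnj (j q) * j q)\<^sup>2 * deriv j q)) (at q)"
    unfolding k_def o_def
    by (rule DERIV_chain2[OF mob_deriv[OF jq jq] holomorphic_derivI[OF hol open_ball]]) (use q in auto)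
  have nq: "1 - cnj q * q \<noteq> 0" using mob_deriv_self_ne0[OF q] .
  have nj: "1 - cnj (j q) * j q \<noteq> 0" using mob_deriv_self_ne0[OF jq] .
  have E: "l q / (1 - cnj q * q) = deriv j q / (1 - cnj (j q) * j q)"
    using DERIV_unique[OF D1 D2] nq nj by (simp add: power2_eq_square)
  have cq: "1 - cnj q * q = of_real (1 - (norm q)\<^sup>2)"
    using complex_norm_square[of q] by (simp add: mult.commute)
  have cj: "1 - cnj (j q) * j q = of_real (1 - (norm (j q))\<^sup>2)"
    using complex_norm_square[of "j q"] by (simp add: mult.commute)
  have pq: "1 - (norm q)\<^sup>2 > 0" using q by (simp add: abs_square_less_1)
  have pj: "1 - (norm (j q))\<^sup>2 > 0" using jq by (simp add: abs_square_less_1)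
  have "norm (l q / of_real (1 - (norm q)\<^sup>2)) = norm (deriv j q / of_real (1 - (norm (j q))\<^sup>2))"
    using E unfolding cq cj by simp
  then have "norm (l q) / (1 - (norm q)\<^sup>2) = norm (deriv j q) / (1 - (norm (j q))\<^sup>2)"
    using pq pj by (simp only: norm_divide norm_of_real) simp
  moreover have "norm (l q) \<le> 1" using l(2) q by simp
  ultimately have "norm (deriv j q) / (1 - (norm (j q))\<^sup>2) \<le> 1 / (1 - (norm q)\<^sup>2)"
    using pq by (metis divide_right_mono less_imp_le)
  then show ?thesis using pq pj by (simp add: field_simps)
qed



lemma fb_norm: "f ` ball 0 1 \<subseteq> ball (0::complex) 1 \<Longrightarrow> norm (z::complex) < 1 \<Longrightarrow> norm (f z) < 1"
proof -
  assume a: "f ` ball 0 1 \<subseteq> ball 0 1" "norm z < 1"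
  then have "z \<in> ball 0 1" by simp
  then have "f z \<in> f ` ball 0 1" by (rule imageI)
  then have "f z \<in> ball 0 1" using a(1) by blast
  then show ?thesis by simp
qed

lemma comp_mob_props:
  assumes holf: "f holomorphic_on ball 0 1" and fb: "f ` ball 0 1 \<subseteq> ball 0 1" and c: "norm c < 1"
  shows "(\<lambda>z. mob c (f z)) holomorphic_on ball 0 1"
    "\<forall>z\<in>ball 0 1. norm (mob c (f z)) \<le> 1"
    "\<forall>z\<in>ball 0 1. norm (mob c (f z)) < 1"
proof -
  show "(\<lambda>z. mob c (f z)) holomorphic_on ball 0 1"
    using holomorphic_on_compose_gen[OF holf mob_hol[OF c] fb] by (simp add: o_def)
  show "\<forall>z\<in>ball 0 1. norm (mob c (f z)) < 1"
    using fb_norm[OF fb] mob_norm_lt1[OF c] by auto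
  then show "\<forall>z\<in>ball 0 1. norm (mob c (f z)) \<le> 1" by (auto simp: less_imp_le)
qed

lemma comp_mob_deriv0:
  assumes holf: "f holomorphic_on ball 0 1" and fb: "f ` ball 0 1 \<subseteq> ball 0 1" and c: "norm c < 1"
    and p: "norm p < 1" and df: "deriv f p = 0"
  shows "((\<lambda>z. mob c (f z)) has_field_derivative 0) (at p)"
proof -
  have fp: "norm (f p) < 1" using fb_norm[OF fb p] .
  show ?thesis
    using DERIV_chain2[OF mob_deriv[OF c fp] holomorphic_derivI[OF holf open_ball, of p]] p df
    by simp
qed

lemma double_bound:
  assumes holf: "f holomorphic_on ball 0 1" and fb: "f ` ball 0 1 \<subseteq> ball 0 1" and f0: "f 0 = 0"
    and c: "norm c < 1" and p: "norm p < 1" and fp: "f p = c" and df: "deriv f p = 0"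
  shows "norm c \<le> (norm p)\<^sup>2"
proof -
  note H = comp_mob_props[OF holf fb c]
  have hp: "mob c (f p) = 0" using fp by simp
  have dh: "deriv (\<lambda>z. mob c (f z)) p = 0"
    using DERIV_imp_deriv[OF comp_mob_deriv0[OF holf fb c p df]] .
  obtain j where j: "j holomorphic_on ball 0 1" "\<forall>z\<in>ball 0 1. norm (j z) \<le> 1"
    "\<forall>z\<in>ball 0 1. mob c (f z) = (mob p z)\<^sup>2 * j z"
    using factor2[OF H(1) H(2) p hp dh] by blast
  have "-c = p\<^sup>2 * j 0" using j(3)[rule_format, of 0] f0 by simp
  then have "norm c = (norm p)\<^sup>2 * norm (j 0)" by (metis norm_minus_cancel norm_mult norm_power)
  also have "\<dots> \<le> (norm p)\<^sup>2 * 1" using j(2) by (intro mult_left_mono) auto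
  finally show ?thesis by simp
qed

lemma psi_factor:
  assumes holf: "f holomorphic_on ball 0 1" and fb: "f ` ball 0 1 \<subseteq> ball 0 1" and f0: "f 0 = 0"
  obtains \<psi> where "\<psi> holomorphic_on ball 0 1" "\<forall>z\<in>ball 0 1. norm (\<psi> z) \<le> 1"
    "\<forall>z\<in>ball 0 1. f z = z * \<psi> z"
proof -
  have lef: "\<forall>z\<in>ball 0 1. norm (f z) \<le> 1" using fb by (auto simp: less_imp_le)
  obtain l where holl: "l holomorphic_on ball 0 1" and kl: "\<And>z. norm z < 1 \<Longrightarrow> f z = z * l z"
      and dl: "deriv f 0 = l 0"
    using Schwarz3[OF holf f0] by blast
  note S = schwarz_le[OF holf lef f0]
  have lel: "norm (l w) \<le> 1" if "norm w < 1" for w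
  proof (cases "w = 0")
    case True then show ?thesis using S(2) dl by simp
  next
    case False
    have "norm (f w) \<le> norm w" using S(1) that by auto
    then have "norm w * norm (l w) \<le> norm w * 1"
      using kl[OF that] by (simp add: norm_mult)
    then show ?thesis using False by simp
  qed
  show ?thesis by (rule that[OF holl]) (use lel kl in auto)
qed

lemma schwarz_f:
  assumes holf: "f holomorphic_on ball 0 1" and fb: "f ` ball 0 1 \<subseteq> ball 0 1" and f0: "f 0 = 0"
    and q: "norm q < 1"
  shows "norm (f q) \<le> norm q"
proof -
  have lef: "\<forall>z\<in>ball 0 1. norm (f z) \<le> 1" using fb by (auto simp: less_imp_le)
  show ?thesis using schwarz_le(1)[OF holf lef f0] q by auto
qed

lemma one_minus_cnj_le2: "norm p < 1 \<Longrightarrow> norm q < 1 \<Longrightarrow> norm (1 - cnj p * q) \<le> 2"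
proof -
  assume "norm p < 1" "norm q < 1"
  then have "norm (cnj p * q) \<le> 1" by (simp add: norm_mult mult_le_one)
  then have "norm (1 - cnj p * q) \<le> 1 + 1" by (metis norm_one norm_triangle_ineq4 add_left_mono order_trans)
  then show ?thesis by simp
qed

lemma one_minus_cnj_ge: "norm (1 - cnj a * b) \<ge> 1 - norm a * norm b"
proof -
  have "norm (1::complex) - norm (cnj a * b) \<le> norm (1 - cnj a * b)" by (rule norm_triangle_ineq2)
  then show ?thesis by (simp add: norm_mult)
qed



lemma arith_LB2:
  fixes P Q J0 Jq D :: real
  assumes P: "0 \<le> P" "P < 1" and Q: "0 \<le> Q" "Q < 1" and J0: "0 \<le> J0" "J0 \<le> 1"
    and Jq: "0 \<le> Jq" "Jq < 1" and D: "0 \<le> D"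
    and b: "(1 - P) * Jq / 2 \<le> D" and c: "D * (1 - Q\<^sup>2) \<le> 1 - Jq\<^sup>2"
    and d: "(1 - Q\<^sup>2) * (1 - J0 * Jq)\<^sup>2 \<le> (1 - J0\<^sup>2) * (1 - Jq\<^sup>2)"
  shows "(1 - P) * (1 - Q\<^sup>2)\<^sup>2 \<le> 20 * (1 - J0)"
proof -
  define x where "x = 1 - Jq"
  define y where "y = 1 - Q\<^sup>2"
  define z where "z = 1 - P"
  define E where "E = 1 - J0\<^sup>2"
  have x: "0 < x" "x \<le> 1" using Jq by (auto simp: x_def)
  have y: "0 < y" "y \<le> 1" using Q by (auto simp: y_def abs_square_less_1)
  have z: "0 < z" "z \<le> 1" using P by (auto simp: z_def)
  have E: "E \<le> 2 * (1 - J0)"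
  proof -
    have "0 \<le> (1 - J0)\<^sup>2" by simp
    moreover have "(1 - J0)\<^sup>2 = 1 - 2 * J0 + J0\<^sup>2" by (simp add: power2_eq_square algebra_simps)
    ultimately show ?thesis unfolding E_def by (smt (verit))
  qed
  have e1: "1 - Jq\<^sup>2 = x * (1 + Jq)" by (simp add: x_def power2_eq_square algebra_simps)
  have "J0 * Jq \<le> 1 * Jq" by (rule mult_right_mono) (use J0 Jq in auto)
  then have "(1 - J0 * Jq) \<ge> x" by (simp add: x_def)
  then have "(1 - J0 * Jq)\<^sup>2 \<ge> x\<^sup>2" using x by (simp add: power_mono)
  then have "y * x\<^sup>2 \<le> y * (1 - J0 * Jq)\<^sup>2" using y by (intro mult_left_mono) auto
  also have "\<dots> \<le> E * (1 - Jq\<^sup>2)" using d by (simp add: y_def E_def)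
  finally have "y * x\<^sup>2 \<le> E * (x * (1 + Jq))" using e1 by simp
  then have "x * (y * x) \<le> x * (E * (1 + Jq))" by (simp add: power2_eq_square algebra_simps)
  then have "y * x \<le> E * (1 + Jq)" using x by (simp add: mult_le_cancel_left_pos)
  also have "\<dots> \<le> E * 2" 
  proof -
    have "E \<ge> 0" using J0 by (simp add: E_def abs_square_le_1)
    then show ?thesis using Jq by (intro mult_left_mono) auto
  qed
  finally have yx: "y * x \<le> 2 * E" by simp
  have "z * Jq / 2 * y \<le> D * y" using b y by (simp add: z_def mult_right_mono)
  also have "\<dots> \<le> x * (1 + Jq)" using c e1 by (simp add: y_def)
  also have "\<dots> \<le> 2 * x" using x Jq by simp
  finally have zy: "z * (1 - x) * y \<le> 4 * x" by (simp add: x_def)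
  have "z * y\<^sup>2 = z * (1 - x) * y * y + z * y * (x * y)" by (simp add: power2_eq_square algebra_simps)
  also have "\<dots> \<le> 4 * x * y + 1 * (x * y)"
  proof (rule add_mono)
    show "z * (1 - x) * y * y \<le> 4 * x * y" using zy y by (simp add: mult_right_mono)
    have "z * y \<le> 1" using y z by (simp add: mult_le_one)
    then show "z * y * (x * y) \<le> 1 * (x * y)" using x y by (intro mult_right_mono) auto
  qed
  also have "\<dots> = 5 * (y * x)" by simp
  also have "\<dots> \<le> 10 * E" using yx by (simp add: mult.commute)
  also have "\<dots> \<le> 20 * (1 - J0)" using E by simp
  finally show ?thesis by (simp add: z_def y_def)
qed

lemma arith_LB1:
  fixes P Q a b C :: real
  assumes P: "0 \<le> P" "P < 1" and Q: "0 \<le> Q" "Q < 1" and a: "0 \<le> a" "a < 1" "a \<le> sqrt C"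
    and b: "0 \<le> b" "b < 1"
    and d: "(1 - P) * (1 - Q\<^sup>2) / 4 * (1 - a * b)\<^sup>2 \<le> (1 - a\<^sup>2) * (1 - b\<^sup>2)"
  shows "(1 - P) * (1 - Q\<^sup>2) * (1 - sqrt C) \<le> 8 * (1 - b\<^sup>2)"
proof -
  define K where "K = (1 - P) * (1 - Q\<^sup>2) / 4"
  have K: "0 \<le> K" "K \<le> 1/4" using P Q by (auto simp: K_def abs_square_le_1 mult_le_one)
  have "1 - a * b \<ge> 1 - a" using a b by (smt (verit) mult_right_le_one_le)
  then have "(1 - a * b)\<^sup>2 \<ge> (1 - a)\<^sup>2" using a by (simp add: power_mono)
  then have "K * (1 - a)\<^sup>2 \<le> (1 - a\<^sup>2) * (1 - b\<^sup>2)" using d K unfolding K_def[symmetric]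
    by (smt (verit) mult_left_mono)
  also have "\<dots> = (1 - a) * ((1 + a) * (1 - b\<^sup>2))" by (simp add: power2_eq_square algebra_simps)
  finally have "(1 - a) * (K * (1 - a)) \<le> (1 - a) * ((1 + a) * (1 - b\<^sup>2))"
    by (simp add: power2_eq_square algebra_simps)
  then have "K * (1 - a) \<le> (1 + a) * (1 - b\<^sup>2)" using a by simp
  also have "\<dots> \<le> 2 * (1 - b\<^sup>2)"
  proof -
    have "1 - b\<^sup>2 \<ge> 0" using b by (simp add: abs_square_le_1)
    then show ?thesis using a by (intro mult_right_mono) auto
  qed
  finally have "K * (1 - a) \<le> 2 * (1 - b\<^sup>2)" .
  moreover have "K * (1 - sqrt C) \<le> K * (1 - a)" using a K by (intro mult_left_mono) auto
  ultimately show ?thesis by (simp add: K_def)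
qed



lemma mob_d:
  assumes u: "norm u < 1" and v: "norm v < 1" and m: "norm (mob u v) \<le> r"
  shows "(1 - r\<^sup>2) * (1 - norm u * norm v)\<^sup>2 \<le> (1 - (norm u)\<^sup>2) * (1 - (norm v)\<^sup>2)"
proof -
  define N where "N = norm (1 - cnj u * v)"
  have N0: "N > 0" using mob_denom[OF u v] by (simp add: N_def)
  have Nge: "N \<ge> 1 - norm u * norm v" using one_minus_cnj_ge[of u v] by (simp add: N_def)
  have uv: "norm u * norm v \<le> 1" using u v by (simp add: mult_le_one)
  have id: "1 - (norm (mob u v))\<^sup>2 = (1 - (norm u)\<^sup>2) * (1 - (norm v)\<^sup>2) / N\<^sup>2"
    using mob_identity[OF u v] by (simp add: N_def)
  have "(norm (mob u v))\<^sup>2 \<le> r\<^sup>2" using m by (simp add: power_mono)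
  then have "1 - r\<^sup>2 \<le> (1 - (norm u)\<^sup>2) * (1 - (norm v)\<^sup>2) / N\<^sup>2" using id by simp
  then have A: "(1 - r\<^sup>2) * N\<^sup>2 \<le> (1 - (norm u)\<^sup>2) * (1 - (norm v)\<^sup>2)"
    using N0 by (simp add: field_simps)
  show ?thesis
  proof (cases "1 - r\<^sup>2 \<ge> 0")
    case True
    have "(1 - norm u * norm v)\<^sup>2 \<le> N\<^sup>2" using Nge uv by (intro power_mono) auto
    then have "(1 - r\<^sup>2) * (1 - norm u * norm v)\<^sup>2 \<le> (1 - r\<^sup>2) * N\<^sup>2"
      using True by (intro mult_left_mono) auto
    then show ?thesis using A by linarith
  next
    case False
    have "0 \<le> (1 - (norm u)\<^sup>2) * (1 - (norm v)\<^sup>2)" using u v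
      by (intro mult_nonneg_nonneg) (auto simp: abs_square_le_1 less_imp_le)
    moreover have "(1 - r\<^sup>2) * (1 - norm u * norm v)\<^sup>2 \<le> 0" using False
      by (intro mult_nonpos_nonneg) auto
    ultimately show ?thesis by linarith
  qed
qed

lemma mob_lower:
  assumes p: "norm p < 1" and q: "norm q < 1"
  shows "(1 - (norm p)\<^sup>2) * (1 - (norm q)\<^sup>2) / 4 \<le> 1 - (norm (mob p q))\<^sup>2"
proof -
  define N where "N = norm (1 - cnj p * q)"
  have N0: "N > 0" using mob_denom[OF p q] by (simp add: N_def)
  have N2: "N \<le> 2" using one_minus_cnj_le2[OF p q] by (simp add: N_def)
  have "N\<^sup>2 \<le> 2\<^sup>2" using N0 N2 by (intro power_mono) auto
  moreover have X: "0 \<le> (1 - (norm p)\<^sup>2) * (1 - (norm q)\<^sup>2)" using p q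
    by (intro mult_nonneg_nonneg) (auto simp: abs_square_le_1 less_imp_le)
  ultimately have "(1 - (norm p)\<^sup>2) * (1 - (norm q)\<^sup>2) / 4 \<le> (1 - (norm p)\<^sup>2) * (1 - (norm q)\<^sup>2) / N\<^sup>2"
    using N0 by (intro divide_left_mono) auto
  then show ?thesis using mob_identity[OF p q] by (simp add: N_def)
qed

lemma deriv_const_ball:
  assumes "\<forall>z\<in>ball 0 1. j z = c'" "norm q < 1"
  shows "deriv j q = 0"
proof -
  have "(j has_field_derivative 0) (at q)"
    by (rule has_field_derivative_transform_within_open[OF DERIV_const open_ball[of 0 1]]) (use assms in auto)
  then show ?thesis by (rule DERIV_imp_deriv)
qed

lemma LBV0:
  assumes holf: "f holomorphic_on ball 0 1" and fb: "f ` ball 0 1 \<subseteq> ball 0 1" and f0: "f 0 = 0"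
    and c0: "c \<noteq> 0" and c1: "norm c < 1" and p: "norm p < 1" and q: "norm q < 1"
    and fp: "f p = c" and dfp: "deriv f p = 0" and fq: "f q = - c"
  shows "(1 - (norm p)\<^sup>2) * (1 - (norm q)\<^sup>2) * (1 - sqrt (norm c)) \<le> 8 * (1 - (norm c / norm q)\<^sup>2)"
proof -
  obtain \<psi> where \<psi>: "\<psi> holomorphic_on ball 0 1" "\<forall>z\<in>ball 0 1. norm (\<psi> z) \<le> 1"
    "\<forall>z\<in>ball 0 1. f z = z * \<psi> z"
    using psi_factor[OF holf fb f0] by blast
  have lt: "\<forall>z\<in>ball 0 1. norm (\<psi> z) < 1"
  proof -
    { fix c' assume c': "norm c' = 1" "\<forall>z\<in>ball 0 1. \<psi> z = c'"
      have "((\<lambda>z. z * c') has_field_derivative c') (at p)"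
        using DERIV_cmult_right[OF DERIV_ident, of c'] by simp
      then have "(f has_field_derivative c') (at p)"
        by (rule has_field_derivative_transform_within_open[OF _ open_ball[of 0 1]])
           (use p \<psi>(3) c' in auto)
      then have "deriv f p = c'" by (rule DERIV_imp_deriv)
      then have False using dfp c' by auto }
    then show ?thesis using hol_le1_dichot[OF \<psi>(1) \<psi>(2)] by blast
  qed
  have p0: "p \<noteq> 0" using fp f0 c0 by auto
  have q0: "q \<noteq> 0" using fq f0 c0 by auto
  have "c = p * \<psi> p" using \<psi>(3) p fp by auto
  then have \<psi>p: "\<psi> p = c / p" using p0 by (metis nonzero_mult_div_cancel_left)
  have "- c = q * \<psi> q" using \<psi>(3) q fq by auto
  then have \<psi>q: "\<psi> q = - c / q" using q0 by (metis nonzero_mult_div_cancel_left)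
  define a where "a = norm (\<psi> p)"
  define b where "b = norm (\<psi> q)"
  have a1: "a < 1" using lt p by (simp add: a_def)
  have b1: "b < 1" using lt q by (simp add: b_def)
  have adef: "a = norm c / norm p" using \<psi>p by (simp add: a_def norm_divide)
  have bdef: "b = norm c / norm q" using \<psi>q by (simp add: b_def norm_divide)
  have dp: "norm c \<le> (norm p)\<^sup>2" by (rule double_bound[OF holf fb f0 c1 p fp dfp])
  have "sqrt (norm c) \<le> sqrt ((norm p)\<^sup>2)" using dp by (rule real_sqrt_le_mono)
  then have "sqrt (norm c) \<le> norm p" by simp
  then have asq: "a \<le> sqrt (norm c)"
  proof -
    assume s: "sqrt (norm c) \<le> norm p"
    have sc: "sqrt (norm c) > 0" using c0 by simp
    have pp: "norm p > 0" using s sc by linarith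
    have "a = norm c / norm p" by (rule adef)
    also have "\<dots> \<le> norm c / sqrt (norm c)" using s sc pp by (intro divide_left_mono) auto
    also have "\<dots> = sqrt (norm c)" using sc by (metis real_div_sqrt norm_ge_zero)
    finally show ?thesis .
  qed
  have m: "norm (mob (\<psi> p) (\<psi> q)) \<le> norm (mob p q)" by (rule SPmod[OF \<psi>(1) lt p q])
  have d1: "(1 - (norm (mob p q))\<^sup>2) * (1 - a * b)\<^sup>2 \<le> (1 - a\<^sup>2) * (1 - b\<^sup>2)"
    using mob_d[OF _ _ m] lt p q by (simp add: a_def b_def)
  have lo: "(1 - (norm p)\<^sup>2) * (1 - (norm q)\<^sup>2) / 4 \<le> 1 - (norm (mob p q))\<^sup>2" by (rule mob_lower[OF p q])
  have "(1 - (norm p)\<^sup>2) * (1 - (norm q)\<^sup>2) / 4 * (1 - a * b)\<^sup>2 \<le> (1 - (norm (mob p q))\<^sup>2) * (1 - a * b)\<^sup>2"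
    using lo by (intro mult_right_mono) auto
  then have d: "(1 - (norm p)\<^sup>2) * (1 - (norm q)\<^sup>2) / 4 * (1 - a * b)\<^sup>2 \<le> (1 - a\<^sup>2) * (1 - b\<^sup>2)"
    using d1 by linarith
  have "(1 - (norm p)\<^sup>2) * (1 - (norm q)\<^sup>2) * (1 - sqrt (norm c)) \<le> 8 * (1 - b\<^sup>2)"
    by (rule arith_LB1[OF _ _ _ _ _ a1 asq _ b1 d]) (use p q in \<open>auto simp: a_def b_def abs_square_less_1\<close>)
  then show ?thesis by (simp add: bdef)
qed

lemma LBVV:
  assumes holf: "f holomorphic_on ball 0 1" and fb: "f ` ball 0 1 \<subseteq> ball 0 1" and f0: "f 0 = 0"
    and c0: "c \<noteq> 0" and c1: "norm c < 1" and p: "norm p < 1" and q: "norm q < 1"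
    and fp: "f p = c" and dfp: "deriv f p = 0" and fq: "f q = - c" and dfq: "deriv f q = 0"
  shows "(1 - (norm p)\<^sup>2) * (1 - (norm q)\<^sup>2)\<^sup>2 \<le> 20 * (1 - norm c / (norm p)\<^sup>2)"
proof -
  define h where "h = (\<lambda>z. mob c (f z))"
  have H1: "h holomorphic_on ball 0 1" using comp_mob_props(1)[OF holf fb c1] by (simp add: h_def)
  have H2: "\<forall>z\<in>ball 0 1. norm (h z) \<le> 1" using comp_mob_props(2)[OF holf fb c1] by (simp add: h_def)
  have hp: "h p = 0" using fp by (simp add: h_def)
  have dh: "deriv h p = 0"
    using DERIV_imp_deriv[OF comp_mob_deriv0[OF holf fb c1 p dfp]] by (simp add: h_def)
  obtain j where j: "j holomorphic_on ball 0 1" "\<forall>z\<in>ball 0 1. norm (j z) \<le> 1"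
    "\<forall>z\<in>ball 0 1. h z = (mob p z)\<^sup>2 * j z"
    using factor2[OF H1 H2 p hp dh] by blast
  have p0: "p \<noteq> 0" using fp f0 c0 by auto
  have pq: "p \<noteq> q" using fp fq c0 by auto
  have "-c = p\<^sup>2 * j 0" using j(3)[rule_format, of 0] f0 by (simp add: h_def)
  then have nc: "norm c = (norm p)\<^sup>2 * norm (j 0)" by (metis norm_minus_cancel norm_mult norm_power)
  then have J0: "norm (j 0) = norm c / (norm p)\<^sup>2" using p0 by simp
  define j1 where "j1 = (\<lambda>z. mob p z * j z)"
  have holj1: "j1 holomorphic_on ball 0 1"
    unfolding j1_def by (intro holomorphic_intros mob_hol[OF p] j(1))
  have hj1: "\<forall>z\<in>ball 0 1. h z = mob p z * j1 z" using j(3) by (simp add: j1_def power2_eq_square)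
  define dq where "dq = (1 - cnj p * p) / (1 - cnj p * q)\<^sup>2"
  have Dh: "(h has_field_derivative (mob p q * deriv j1 q + dq * j1 q)) (at q)"
    using deriv_mob_prod[OF holj1 p q hj1] by (simp add: dq_def)
  have Dj1: "deriv j1 q = mob p q * deriv j q + dq * j q"
    using DERIV_imp_deriv[OF deriv_mob_prod[OF j(1) p q, of j1]] by (simp add: dq_def j1_def)
  have Dh0: "(h has_field_derivative 0) (at q)"
    using comp_mob_deriv0[OF holf fb c1 q dfq] by (simp add: h_def)
  have Z: "mob p q * deriv j1 q + dq * j1 q = 0" using DERIV_unique[OF Dh Dh0] .
  have "mob p q * (mob p q * deriv j q + dq * j q) + dq * (mob p q * j q) = 0"
    using Z[unfolded Dj1] by (simp add: j1_def)
  then have E0: "mob p q * (mob p q * deriv j q + 2 * dq * j q) = 0"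
    by (simp add: algebra_simps)
  have mpq: "mob p q \<noteq> 0" using mob_eq0[OF p q] pq by simp
  then have "mob p q * deriv j q + 2 * dq * j q = 0" using E0 by simp
  then have E: "mob p q * deriv j q = - (2 * dq * j q)" by (simp add: eq_neg_iff_add_eq_0)
  have dq0: "dq \<noteq> 0" using mob_deriv_self_ne0[OF p] mob_denom[OF p q] by (simp add: dq_def)
  have lt: "\<forall>z\<in>ball 0 1. norm (j z) < 1"
  proof -
    { fix c' assume c': "norm c' = 1" "\<forall>z\<in>ball 0 1. j z = c'"
      have "deriv j q = 0" by (rule deriv_const_ball[OF c'(2) q])
      moreover have "j q = c'" using c' q by simp
      ultimately have False using E dq0 c' by auto }
    then show ?thesis using hol_le1_dichot[OF j(1) j(2)] by blast
  qed
  have jq1: "norm (j q) < 1" using lt q by simp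
  have j01: "norm (j 0) < 1" using lt by simp
  have ndq: "norm dq = (1 - (norm p)\<^sup>2) / (norm (1 - cnj p * q))\<^sup>2"
  proof -
    have "1 - cnj p * p = of_real (1 - (norm p)\<^sup>2)"
      using complex_norm_square[of p] by (simp add: mult.commute)
    then have "norm (1 - cnj p * p) = 1 - (norm p)\<^sup>2"
      using p by (simp only: norm_of_real) (simp add: abs_square_less_1 less_imp_le)
    then show ?thesis by (simp add: dq_def norm_divide norm_power)
  qed
  have ndq4: "norm dq \<ge> (1 - (norm p)\<^sup>2) / 4"
  proof -
    have N0: "norm (1 - cnj p * q) > 0" using mob_denom[OF p q] by simp
    have "(norm (1 - cnj p * q))\<^sup>2 \<le> 2\<^sup>2" using one_minus_cnj_le2[OF p q] by (intro power_mono) auto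
    then show ?thesis unfolding ndq using p N0
      by (intro divide_left_mono) (auto simp: abs_square_less_1 less_imp_le)
  qed
  have "2 * norm dq * norm (j q) = norm (mob p q) * norm (deriv j q)"
    using arg_cong[OF E, of norm] by (simp add: norm_mult)
  also have "\<dots> \<le> 1 * norm (deriv j q)"
    using mob_norm_lt1[OF p q] by (intro mult_right_mono) auto
  finally have b0: "2 * norm dq * norm (j q) \<le> norm (deriv j q)" by simp
  have "2 * ((1 - (norm p)\<^sup>2) / 4) * norm (j q) \<le> 2 * norm dq * norm (j q)"
    using ndq4 by (intro mult_right_mono) auto
  moreover have "(1 - (norm p)\<^sup>2) * norm (j q) / 2 = 2 * ((1 - (norm p)\<^sup>2) / 4) * norm (j q)"
    by (simp add: field_simps)
  ultimately have b: "(1 - (norm p)\<^sup>2) * norm (j q) / 2 \<le> norm (deriv j q)" using b0 by linarith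
  have c: "norm (deriv j q) * (1 - (norm q)\<^sup>2) \<le> 1 - (norm (j q))\<^sup>2" by (rule SPD[OF j(1) lt q])
  have m: "norm (mob (j 0) (j q)) \<le> norm q" using SPmod[OF j(1) lt _ q, of 0] by simp
  have d: "(1 - (norm q)\<^sup>2) * (1 - norm (j 0) * norm (j q))\<^sup>2 \<le> (1 - (norm (j 0))\<^sup>2) * (1 - (norm (j q))\<^sup>2)"
    by (rule mob_d[OF j01 jq1 m])
  have "(1 - (norm p)\<^sup>2) * (1 - (norm q)\<^sup>2)\<^sup>2 \<le> 20 * (1 - norm (j 0))"
    by (rule arith_LB2[OF _ _ _ _ _ _ _ jq1 _ b c d]) (use p q j01 in \<open>auto simp: abs_square_less_1 less_imp_le\<close>)
  then show ?thesis using J0 by simp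
qed



lemma marg1:
  fixes C P Q T d :: real
  assumes C: "0 < C" "C < 1" and T: "T = (1 + C) / 2"
    and d: "d = (1 - T) * (1 - T\<^sup>2) * (1 - sqrt C) / 16"
    and P: "C \<le> P" "P < 1" and Q: "C \<le> Q" "Q < 1"
    and h: "(1 - P) * (1 - Q\<^sup>2) * (1 - sqrt C) \<le> 8 * (1 - (C / Q)\<^sup>2)"
  shows "C\<^sup>2 * min (T / C) (1 / (1 - d)) \<le> P * Q"
proof (cases "P \<le> T \<and> Q \<le> T")
  case True
  have sC: "sqrt C < 1" using C by simp
  have T1: "T < 1" "0 < T" using C T by auto
  have Q0: "0 < Q" using C Q by linarith
  have "Q\<^sup>2 \<le> T\<^sup>2" using True Q0 by (intro power_mono) auto
  have T2: "T\<^sup>2 < 1" using T1 by (simp add: abs_square_less_1)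
  have "(1 - T) * (1 - T\<^sup>2) \<le> (1 - P) * (1 - Q\<^sup>2)"
    using True \<open>Q\<^sup>2 \<le> T\<^sup>2\<close> T1 T2 by (intro mult_mono) auto
  then have "(1 - T) * (1 - T\<^sup>2) * (1 - sqrt C) \<le> (1 - P) * (1 - Q\<^sup>2) * (1 - sqrt C)"
    using sC by (intro mult_right_mono) auto
  then have "16 * d \<le> 8 * (1 - (C / Q)\<^sup>2)" using h d by simp
  then have d1: "2 * d \<le> 1 - (C / Q)\<^sup>2" by simp
  define x where "x = C / Q"
  have x: "0 \<le> x" "x \<le> 1" using C Q Q0 by (auto simp: x_def)
  have "1 - x\<^sup>2 = (1 - x) * (1 + x)" by (simp add: power2_eq_square algebra_simps)
  also have "\<dots> \<le> (1 - x) * 2" using x by (intro mult_left_mono) auto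
  finally have X: "1 - x\<^sup>2 \<le> (1 - x) * 2" .
  have d1x: "2 * d \<le> 1 - x\<^sup>2" using d1 by (simp add: x_def)
  have "d \<le> 1 - x" using X d1x by (smt (verit))
  then have "C / Q \<le> 1 - d" by (simp add: x_def)
  then have Cq: "C \<le> (1 - d) * Q" using Q0 by (simp add: divide_le_eq)
  have d0: "0 < d"
    using T1 T2 sC by (simp add: d)
  have d1': "d < 1"
  proof -
    have "(1 - T) * (1 - T\<^sup>2) * (1 - sqrt C) \<le> 1 * 1 * 1"
      using T1 T2 sC C by (intro mult_mono) (auto simp: mult_le_one)
    then show ?thesis by (simp add: d)
  qed
  have "C / (1 - d) \<le> Q" using Cq d1' by (simp add: divide_le_eq mult.commute)
  then have "C * (C / (1 - d)) \<le> P * Q" using P C d1' by (intro mult_mono) auto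
  then have "C\<^sup>2 * (1 / (1 - d)) \<le> P * Q" by (simp add: power2_eq_square)
  moreover have "C\<^sup>2 * min (T / C) (1 / (1 - d)) \<le> C\<^sup>2 * (1 / (1 - d))"
    by (intro mult_left_mono) auto
  ultimately show ?thesis by linarith
next
  case False
  have T0: "0 < T" using C T by simp
  have Pz: "0 \<le> P" using C P by linarith
  from False have "\<not> P \<le> T \<or> \<not> Q \<le> T" by blast
  then have "T * C \<le> P * Q"
  proof
    assume "\<not> P \<le> T"
    then show ?thesis using C Q using T0 Pz by (intro mult_mono) auto
  next
    assume "\<not> Q \<le> T"
    then have "C * T \<le> P * Q" using C P T0 by (intro mult_mono) auto
    then show ?thesis by (simp add: mult.commute)
  qed
  moreover have "T * C = C\<^sup>2 * (T / C)" using C by (simp add: power2_eq_square)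
  moreover have "C\<^sup>2 * min (T / C) (1 / (1 - d)) \<le> C\<^sup>2 * (T / C)"
    by (intro mult_left_mono) auto
  ultimately show ?thesis by linarith
qed

lemma marg2:
  fixes C P Q T d :: real
  assumes C: "0 < C" "C < 1" and T: "T = (1 + C) / 2"
    and d: "d = (1 - T) ^ 3 / 20"
    and P: "C \<le> P" "P < 1" and Q: "C \<le> Q\<^sup>2" "Q\<^sup>2 < 1"
    and h: "(1 - P) * (1 - Q\<^sup>2)\<^sup>2 \<le> 20 * (1 - C / P)"
  shows "C\<^sup>2 * min (T / C) (1 / (1 - d)) \<le> P * Q\<^sup>2"
proof (cases "P \<le> T \<and> Q\<^sup>2 \<le> T")
  case True
  have T1: "T < 1" "0 < T" using C T by auto
  have P0: "0 < P" using C P by linarith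
  have "(1 - T) * (1 - T)\<^sup>2 \<le> (1 - P) * (1 - Q\<^sup>2)\<^sup>2"
    using True T1 by (intro mult_mono power_mono) auto
  then have "20 * d \<le> 20 * (1 - C / P)" using h d by (simp add: power3_eq_cube power2_eq_square)
  then have "d \<le> 1 - C / P" by simp
  then have "C / P \<le> 1 - d" by simp
  then have Cp: "C \<le> (1 - d) * P" using P0 by (simp add: divide_le_eq)
  have d1': "d < 1"
  proof -
    have "(1 - T) ^ 3 \<le> 1 ^ 3" using T1 by (intro power_mono) auto
    then show ?thesis by (simp add: d)
  qed
  have "C / (1 - d) \<le> P" using Cp d1' by (simp add: divide_le_eq mult.commute)
  then have "(C / (1 - d)) * C \<le> P * Q\<^sup>2" using Q C P0 by (intro mult_mono) auto
  then have "C\<^sup>2 * (1 / (1 - d)) \<le> P * Q\<^sup>2" by (simp add: power2_eq_square)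
  moreover have "C\<^sup>2 * min (T / C) (1 / (1 - d)) \<le> C\<^sup>2 * (1 / (1 - d))"
    by (intro mult_left_mono) auto
  ultimately show ?thesis by linarith
next
  case False
  have T0: "0 < T" using C T by simp
  have Pz: "0 \<le> P" using C P by linarith
  from False have "\<not> P \<le> T \<or> \<not> Q\<^sup>2 \<le> T" by blast
  then have "T * C \<le> P * Q\<^sup>2"
  proof
    assume "\<not> P \<le> T"
    have P0': "0 \<le> P" using C P by linarith
    show ?thesis using C Q P0' \<open>\<not> P \<le> T\<close> using T0 Pz by (intro mult_mono) auto
  next
    assume "\<not> Q\<^sup>2 \<le> T"
    then have "C * T \<le> P * Q\<^sup>2" using C P T0 by (intro mult_mono) auto
    then show ?thesis by (simp add: mult.commute)
  qed
  moreover have "T * C = C\<^sup>2 * (T / C)" using C by (simp add: power2_eq_square)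
  moreover have "C\<^sup>2 * min (T / C) (1 / (1 - d)) \<le> C\<^sup>2 * (T / C)"
    by (intro mult_left_mono) auto
  ultimately show ?thesis by linarith
qed



definition kap1 :: "real \<Rightarrow> real" where
  "kap1 C = min (((1 + C) / 2) / C)
     (1 / (1 - (1 - (1 + C) / 2) * (1 - ((1 + C) / 2)\<^sup>2) * (1 - sqrt C) / 16))"

definition kap2 :: "real \<Rightarrow> real" where
  "kap2 C = min (((1 + C) / 2) / C) (1 / (1 - (1 - (1 + C) / 2) ^ 3 / 20))"

lemma div16: "(x::real) \<le> 1 \<Longrightarrow> x / 16 < 1" by linarith

lemma logabs_nz: "z \<noteq> 0 \<Longrightarrow> logabs z = ereal (ln (norm z))"
  by (simp add: logabs_def)

lemma disc_mapD:
  assumes "disc_map f g"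
  shows "f holomorphic_on ball 0 1" "g holomorphic_on ball 0 1"
    "f ` ball 0 1 \<subseteq> ball 0 1" "g ` ball 0 1 \<subseteq> ball 0 1"
  using assms by (auto simp: disc_map_def)

lemma L_aVb0_ge:
  assumes a0: "a \<noteq> 0" and a1: "norm a < 1" and b: "b = - a"
  shows "ereal (ln ((norm a)\<^sup>2 * kap1 (norm a))) \<le> L_aVb0 a b (0, \<gamma>)"
  unfolding L_aVb0_def
proof (rule Inf_greatest)
  fix x assume "x \<in> {2 * logabs z1 + logabs z2 | f g z1 z2.
      disc_map f g \<and> (f 0, g 0) = (0, \<gamma>) \<and> z1 \<in> ball 0 1 \<and> z2 \<in> ball 0 1 \<and>
      (f z1, g z1) = (a, 0) \<and> (f z2, g z2) = (b, 0) \<and> deriv f z1 = 0}"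
  then obtain f g z1 z2 where x: "x = 2 * logabs z1 + logabs z2" and dm: "disc_map f g"
    and f0: "f 0 = 0" and z1: "norm z1 < 1" and z2: "norm z2 < 1" and fz1: "f z1 = a"
    and fz2: "f z2 = - a" and df: "deriv f z1 = 0"
    using b by auto
  note D = disc_mapD[OF dm]
  define C where "C = norm a"
  have C: "0 < C" "C < 1" using a0 a1 by (auto simp: C_def)
  have n1: "z1 \<noteq> 0" using fz1 f0 a0 by auto
  have n2: "z2 \<noteq> 0" using fz2 f0 a0 by auto
  have h: "(1 - (norm z1)\<^sup>2) * (1 - (norm z2)\<^sup>2) * (1 - sqrt C) \<le> 8 * (1 - (C / norm z2)\<^sup>2)"
    using LBV0[OF D(1) D(3) f0 a0 a1 z1 z2 fz1 df fz2] by (simp add: C_def)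
  have P: "C \<le> (norm z1)\<^sup>2" using double_bound[OF D(1) D(3) f0 a1 z1 fz1 df] by (simp add: C_def)
  have Q: "C \<le> norm z2" using schwarz_f[OF D(1) D(3) f0 z2] fz2 by (simp add: C_def)
  have P1: "(norm z1)\<^sup>2 < 1" using z1 by (simp add: abs_square_less_1)
  have M: "C\<^sup>2 * kap1 C \<le> (norm z1)\<^sup>2 * norm z2"
    unfolding kap1_def by (rule marg1[OF C refl refl P P1 Q z2 h])
  have k0: "0 < C\<^sup>2 * kap1 C"
  proof -
    have "0 < (1 - (1 + C) / 2) * (1 - ((1 + C) / 2)\<^sup>2) * (1 - sqrt C) / 16"
      using C by (auto intro!: mult_pos_pos divide_pos_pos simp: abs_square_less_1)
    moreover have "(1 - (1 + C) / 2) * (1 - ((1 + C) / 2)\<^sup>2) * (1 - sqrt C) / 16 < 1"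
    proof -
      have "(1 - (1 + C) / 2) * (1 - ((1 + C) / 2)\<^sup>2) * (1 - sqrt C) \<le> 1 * 1 * 1"
        using C by (intro mult_mono) (auto simp: mult_le_one abs_square_less_1 power_le_one)
      then show ?thesis by (intro div16) simp
    qed
    ultimately show ?thesis using C by (auto simp: kap1_def)
  qed
  have "ln (C\<^sup>2 * kap1 C) \<le> ln ((norm z1)\<^sup>2 * norm z2)" using M k0 by simp
  also have "\<dots> = 2 * ln (norm z1) + ln (norm z2)" using n1 n2 by (simp add: ln_mult ln_realpow)
  finally show "ereal (ln ((norm a)\<^sup>2 * kap1 (norm a))) \<le> x"
    using n1 n2 by (simp add: x logabs_nz C_def)
qed

lemma kap2_pos: "0 < C \<Longrightarrow> C < 1 \<Longrightarrow> 0 < kap2 C"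
proof -
  assume C: "0 < C" "C < 1"
  have "(1 - (1 + C) / 2) ^ 3 \<le> 1 ^ 3" using C by (intro power_mono) auto
  then have "(1 - (1 + C) / 2) ^ 3 / 20 < 1" by simp
  then show ?thesis using C by (auto simp: kap2_def)
qed

lemma L_a0bV_ge:
  assumes a0: "a \<noteq> 0" and a1: "norm a < 1" and b: "b = - a"
  shows "ereal (ln ((norm a)\<^sup>2 * kap1 (norm a))) \<le> L_a0bV a b (0, \<gamma>)"
  unfolding L_a0bV_def
proof (rule Inf_greatest)
  fix x assume "x \<in> {logabs z1 + 2 * logabs z2 | f g z1 z2.
      disc_map f g \<and> (f 0, g 0) = (0, \<gamma>) \<and> z1 \<in> ball 0 1 \<and> z2 \<in> ball 0 1 \<and>
      (f z1, g z1) = (a, 0) \<and> (f z2, g z2) = (b, 0) \<and> deriv f z2 = 0}"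
  then obtain f g z1 z2 where x: "x = logabs z1 + 2 * logabs z2" and dm: "disc_map f g"
    and f0: "f 0 = 0" and z1: "norm z1 < 1" and z2: "norm z2 < 1" and fz1: "f z1 = - (- a)"
    and fz2: "f z2 = - a" and df: "deriv f z2 = 0"
    using b by auto
  note D = disc_mapD[OF dm]
  define C where "C = norm a"
  have a0': "- a \<noteq> 0" using a0 by simp
  have a1': "norm (- a) < 1" using a1 by simp
  have C: "0 < C" "C < 1" using a0 a1 by (auto simp: C_def)
  have n1: "z1 \<noteq> 0" using fz1 f0 a0 by auto
  have n2: "z2 \<noteq> 0" using fz2 f0 a0 by auto
  have h: "(1 - (norm z2)\<^sup>2) * (1 - (norm z1)\<^sup>2) * (1 - sqrt C) \<le> 8 * (1 - (C / norm z1)\<^sup>2)"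
    using LBV0[OF D(1) D(3) f0 a0' a1' z2 z1 fz2 df fz1] by (simp add: C_def)
  have P: "C \<le> (norm z2)\<^sup>2" using double_bound[OF D(1) D(3) f0 a1' z2 fz2 df] by (simp add: C_def)
  have Q: "C \<le> norm z1" using schwarz_f[OF D(1) D(3) f0 z1] fz1 by (simp add: C_def)
  have P1: "(norm z2)\<^sup>2 < 1" using z2 by (simp add: abs_square_less_1)
  have M: "C\<^sup>2 * kap1 C \<le> (norm z2)\<^sup>2 * norm z1"
    unfolding kap1_def by (rule marg1[OF C refl refl P P1 Q z1 h])
  have k0: "0 < C\<^sup>2 * kap1 C"
  proof -
    have "0 < (1 - (1 + C) / 2) * (1 - ((1 + C) / 2)\<^sup>2) * (1 - sqrt C) / 16"
      using C by (auto intro!: mult_pos_pos divide_pos_pos simp: abs_square_less_1)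
    moreover have "(1 - (1 + C) / 2) * (1 - ((1 + C) / 2)\<^sup>2) * (1 - sqrt C) / 16 < 1"
    proof -
      have "(1 - (1 + C) / 2) * (1 - ((1 + C) / 2)\<^sup>2) * (1 - sqrt C) \<le> 1 * 1 * 1"
        using C by (intro mult_mono) (auto simp: mult_le_one abs_square_less_1 power_le_one)
      then show ?thesis by (intro div16) simp
    qed
    ultimately show ?thesis using C by (auto simp: kap1_def)
  qed
  have "ln (C\<^sup>2 * kap1 C) \<le> ln ((norm z2)\<^sup>2 * norm z1)" using M k0 by simp
  also have "\<dots> = ln (norm z1) + 2 * ln (norm z2)" using n1 n2 by (simp add: ln_mult ln_realpow)
  finally show "ereal (ln ((norm a)\<^sup>2 * kap1 (norm a))) \<le> x"
    using n1 n2 by (simp add: x logabs_nz C_def)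
qed

lemma L_aVbV_ge:
  assumes a0: "a \<noteq> 0" and a1: "norm a < 1" and b: "b = - a"
  shows "ereal (ln ((norm a)\<^sup>2 * kap2 (norm a))) \<le> L_aVbV a b (0, \<gamma>)"
  unfolding L_aVbV_def
proof (rule Inf_greatest)
  fix x assume "x \<in> {2 * logabs z1 + 2 * logabs z2 | f g z1 z2.
      disc_map f g \<and> (f 0, g 0) = (0, \<gamma>) \<and> z1 \<in> ball 0 1 \<and> z2 \<in> ball 0 1 \<and>
      (f z1, g z1) = (a, 0) \<and> (f z2, g z2) = (b, 0) \<and> deriv f z1 = 0 \<and> deriv f z2 = 0}"
  then obtain f g z1 z2 where x: "x = 2 * logabs z1 + 2 * logabs z2" and dm: "disc_map f g"
    and f0: "f 0 = 0" and z1: "norm z1 < 1" and z2: "norm z2 < 1" and fz1: "f z1 = a"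
    and fz2: "f z2 = - a" and df1: "deriv f z1 = 0" and df2: "deriv f z2 = 0"
    using b by auto
  note D = disc_mapD[OF dm]
  define C where "C = norm a"
  have a1': "norm (- a) < 1" using a1 by simp
  have C: "0 < C" "C < 1" using a0 a1 by (auto simp: C_def)
  have n1: "z1 \<noteq> 0" using fz1 f0 a0 by auto
  have n2: "z2 \<noteq> 0" using fz2 f0 a0 by auto
  have h: "(1 - (norm z1)\<^sup>2) * (1 - (norm z2)\<^sup>2)\<^sup>2 \<le> 20 * (1 - C / (norm z1)\<^sup>2)"
    using LBVV[OF D(1) D(3) f0 a0 a1 z1 z2 fz1 df1 fz2 df2] by (simp add: C_def)
  have P: "C \<le> (norm z1)\<^sup>2" using double_bound[OF D(1) D(3) f0 a1 z1 fz1 df1] by (simp add: C_def)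
  have Q: "C \<le> (norm z2)\<^sup>2" using double_bound[OF D(1) D(3) f0 a1' z2 fz2 df2] by (simp add: C_def)
  have P1: "(norm z1)\<^sup>2 < 1" using z1 by (simp add: abs_square_less_1)
  have Q1: "(norm z2)\<^sup>2 < 1" using z2 by (simp add: abs_square_less_1)
  have M: "C\<^sup>2 * kap2 C \<le> (norm z1)\<^sup>2 * (norm z2)\<^sup>2"
    unfolding kap2_def by (rule marg2[OF C refl refl P P1 Q Q1 h])
  have k0: "0 < C\<^sup>2 * kap2 C" using kap2_pos[OF C] C by simp
  have "ln (C\<^sup>2 * kap2 C) \<le> ln ((norm z1)\<^sup>2 * (norm z2)\<^sup>2)" using M k0 by simp
  also have "\<dots> = 2 * ln (norm z1) + 2 * ln (norm z2)" using n1 n2 by (simp add: ln_mult ln_realpow)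
  finally show "ereal (ln ((norm a)\<^sup>2 * kap2 (norm a))) \<le> x"
    using n1 n2 by (simp add: x logabs_nz C_def)
qed

lemma L_a0b0_ge:
  assumes a0: "a \<noteq> 0" and b: "b = - a" and g0: "\<gamma> \<noteq> 0"
  shows "ereal (ln (norm \<gamma>)) \<le> L_a0b0 a b (0, \<gamma>)"
  unfolding L_a0b0_def
proof (rule Inf_greatest)
  fix x assume "x \<in> {logabs z1 + logabs z2 | f g z1 z2.
      disc_map f g \<and> (f 0, g 0) = (0, \<gamma>) \<and> z1 \<in> ball 0 1 \<and> z2 \<in> ball 0 1 \<and>
      (f z1, g z1) = (a, 0) \<and> (f z2, g z2) = (b, 0)}"
  then obtain f g z1 z2 where x: "x = logabs z1 + logabs z2" and dm: "disc_map f g"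
    and f0: "f 0 = 0" and gg: "g 0 = \<gamma>" and z1: "norm z1 < 1" and z2: "norm z2 < 1" and fz1: "f z1 = a"
    and fz2: "f z2 = - a" and gz1: "g z1 = 0" and gz2: "g z2 = 0"
    using b by auto
  note D = disc_mapD[OF dm]
  have n1: "z1 \<noteq> 0" using fz1 f0 a0 by auto
  have n2: "z2 \<noteq> 0" using fz2 f0 a0 by auto
  have ne: "z1 \<noteq> z2" using fz1 fz2 a0 by auto
  have lg: "\<forall>z\<in>ball 0 1. norm (g z) \<le> 1" using fb_norm[OF D(4)] by (auto simp: less_imp_le)
  have "norm \<gamma> \<le> norm z1 * norm z2" using two_zeros[OF D(2) lg z1 z2 gz1 gz2 ne] gg by simp
  then have "ln (norm \<gamma>) \<le> ln (norm z1 * norm z2)" using g0 n1 n2 by (subst ln_le_cancel_iff) auto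
  also have "\<dots> = ln (norm z1) + ln (norm z2)" using n1 n2 by (simp add: ln_mult)
  finally show "ereal (ln (norm \<gamma>)) \<le> x"
    using n1 n2 by (simp add: x logabs_nz)
qed



lemma mob_hol_comp:
  assumes w: "norm w < 1" and h: "h holomorphic_on S" and hb: "\<forall>t\<in>S. norm (h t) < 1"
  shows "(\<lambda>t. mob w (h t)) holomorphic_on S"
  unfolding mob_def
  by (intro holomorphic_intros h) (use mob_denom[OF w] hb in auto)

lemma mob_prod_pm:
  assumes b: "norm \<beta> < 1" and u: "norm u < 1"
  shows "mob (-\<beta>) u * mob (-\<beta>) (-u) = - mob (\<beta>\<^sup>2) (u\<^sup>2)"
proof -
  have b': "norm (-\<beta>) < 1" using b by simp
  have d1: "1 + cnj \<beta> * u \<noteq> 0" using mob_denom[OF b' u] by simp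
  have d2: "1 - cnj \<beta> * u \<noteq> 0" using mob_denom[OF b u] by simp
  show ?thesis using d1 d2
    by (simp add: mob_def field_simps power2_eq_square) (metis minus_diff_eq minus_divide_left)
qed

lemma norm_lt1_mult: "norm (x::complex) < 1 \<Longrightarrow> norm y \<le> 1 \<Longrightarrow> norm (x * y) < 1"
proof -
  assume "norm x < 1" "norm y \<le> 1"
  then have "norm x * norm y \<le> norm x" by (simp add: mult_left_le)
  then show ?thesis using \<open>norm x < 1\<close> by (simp add: norm_mult)
qed

lemma construction:
  fixes a' u X \<beta> lam vsq v Vu Vv VX kX ku \<tau> \<gamma> \<epsilon> :: complex and q r :: real
  assumes a1: "norm a' < 1" "a' \<noteq> 0" and r: "0 < r" "r < 1"
  and u: "norm u < 1" "u \<noteq> 0"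
  and X: "X = mob (-(u\<^sup>2)) (-a')"
  and \<beta>: "\<beta>\<^sup>2 = X" "\<beta> \<noteq> 0"
  and lam: "lam = a' / mob X (u\<^sup>2)"
  and vsq: "vsq = mob (-X) (-a' / lam)"
  and v: "v\<^sup>2 = vsq" "v \<noteq> 0"
  and q: "q = 1 - norm \<epsilon> / 2" "0 < q"
  and Vu: "Vu = - \<epsilon> / (2 * u * q)" "norm Vu < 1"
  and Vv: "Vv = - \<epsilon> / (2 * v * q)" "norm Vv < 1"
  and VX: "VX = (\<epsilon> / 2 - \<gamma>) / (\<beta> * q)" "norm VX < 1"
  and kX: "kX = mob Vv VX / mob vsq X" "norm kX < 1"
  and ku: "ku = mob Vv Vu / mob vsq (u\<^sup>2)" "norm ku < 1"
  and \<tau>: "\<tau> = mob kX ku / mob X (u\<^sup>2)" "norm \<tau> \<le> 1"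
  shows "coman_lempert [(r * a', 0), (- (r * a'), 0), (- (r * a'), \<epsilon>), (r * a', \<epsilon>)] (0, \<gamma>)
           \<le> ereal (2 * ln (norm a'))"
proof -
  define s where "s = u\<^sup>2"
  have s1: "norm s < 1" using u by (simp add: s_def norm_power power_less_one_iff abs_square_less_1)
  have ms1: "norm (-s) < 1" using s1 by simp
  have ma1: "norm (-a') < 1" using a1 by simp
  have X1: "norm X < 1" using mob_norm_lt1[OF ms1 ma1] by (simp add: X s_def)
  have msX: "mob s X = - a'" using mob_inv1[OF s1 ma1] by (simp add: X s_def)
  have nXs: "norm (mob X s) = norm a'" using mob_norm_sym[of X s] msX by simp
  have mXs0: "mob X s \<noteq> 0" using nXs a1 by auto
  have b1: "norm \<beta> < 1"
  proof -
    have "(norm \<beta>)\<^sup>2 < 1" using X1 \<beta>(1) by (metis norm_power)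
    then show ?thesis by (simp add: abs_square_less_1)
  qed
  have lam1: "norm lam = 1" using nXs a1 by (simp add: lam s_def norm_divide)
  have lam0: "lam \<noteq> 0" using lam1 by auto
  define \<nu> where "\<nu> = - a' / lam"
  have n\<nu>: "norm \<nu> = norm a'" using lam1 by (simp add: \<nu>_def norm_divide)
  have \<nu>1: "norm \<nu> < 1" using n\<nu> a1 by simp
  have mXs: "mob X s = a' / lam" using mXs0 a1 by (simp add: lam s_def)
  have mX1: "norm (-X) < 1" using X1 by simp
  have vsq1: "norm vsq < 1" using mob_norm_lt1[OF mX1 \<nu>1] by (simp add: vsq \<nu>_def)
  have mXv: "mob X vsq = \<nu>" using mob_inv1[OF X1 \<nu>1] by (simp add: vsq \<nu>_def)
  have v1: "norm v < 1"
  proof -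
    have "(norm v)\<^sup>2 < 1" using vsq1 v(1) by (metis norm_power)
    then show ?thesis by (simp add: abs_square_less_1)
  qed
  have vX: "vsq \<noteq> X" using mXv n\<nu> a1 by auto
  have vs: "vsq \<noteq> s" using mXv mXs a1 lam0 by (auto simp: \<nu>_def)
  have mvX0: "mob vsq X \<noteq> 0" using mob_eq0[OF vsq1 X1] vX by simp
  have mvs0: "mob vsq s \<noteq> 0" using mob_eq0[OF vsq1 s1] vs by simp
  have mkX: "norm (-kX) < 1" using kX(2) by simp
  have mVv: "norm (-Vv) < 1" using Vv(2) by simp
  define k where "k = (\<lambda>z. mob (-kX) (mob X z * \<tau>))"
  define K where "K = (\<lambda>z. mob (-Vv) (mob vsq z * k z))"
  have k1: "norm (k z) < 1" if "norm z < 1" for z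
    unfolding k_def by (rule mob_norm_lt1[OF mkX norm_lt1_mult[OF mob_norm_lt1[OF X1 that] \<tau>(2)]])
  have K1: "norm (K z) < 1" if "norm z < 1" for z
    unfolding K_def
    by (rule mob_norm_lt1[OF mVv norm_lt1_mult[OF mob_norm_lt1[OF vsq1 that] less_imp_le[OF k1[OF that]]]])
  have holk: "k holomorphic_on ball 0 1"
    unfolding k_def
    by (rule mob_hol_comp[OF mkX]) (use mob_hol[OF X1] mob_norm_lt1[OF X1] \<tau>(2) norm_lt1_mult in
        \<open>auto intro!: holomorphic_intros\<close>)
  have holK: "K holomorphic_on ball 0 1"
    unfolding K_def
    by (rule mob_hol_comp[OF mVv]) (use mob_hol[OF vsq1] holk mob_norm_lt1[OF vsq1] k1 norm_lt1_mult in
        \<open>auto intro!: holomorphic_intros simp: less_imp_le\<close>)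
  define m where "m = mob \<beta>"
  have m1: "norm (m t) < 1" if "norm t < 1" for t using mob_norm_lt1[OF b1 that] by (simp add: m_def)
  have m21: "norm ((m t)\<^sup>2) < 1" if "norm t < 1" for t
    using m1[OF that] by (simp add: norm_power abs_square_less_1)
  have holm: "m holomorphic_on ball 0 1" using mob_hol[OF b1] by (simp add: m_def)
  have holm2: "(\<lambda>t. (m t)\<^sup>2) holomorphic_on ball 0 1" by (intro holomorphic_intros holm)
  define f where "f = (\<lambda>t. of_real r * lam * mob X ((m t)\<^sup>2))"
  define g where "g = (\<lambda>t. \<epsilon> / 2 + m t * of_real q * K ((m t)\<^sup>2))"
  have holf: "f holomorphic_on ball 0 1"
    unfolding f_def by (intro holomorphic_intros mob_hol_comp[OF X1 holm2]) (use m21 in auto)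
  have holg: "g holomorphic_on ball 0 1"
  proof -
    have im: "(\<lambda>t. (m t)\<^sup>2) ` ball 0 1 \<subseteq> ball 0 1" using m21 by auto
    have "(\<lambda>t. K ((m t)\<^sup>2)) holomorphic_on ball 0 1"
      using holomorphic_on_compose_gen[OF holm2 holK im] by (simp add: o_def)
    then show ?thesis unfolding g_def by (intro holomorphic_intros holm)
  qed
  have fb: "f ` ball 0 1 \<subseteq> ball 0 1"
  proof
    fix y assume "y \<in> f ` ball 0 1"
    then obtain t where t: "norm t < 1" "y = f t" by auto
    have "norm y = r * norm (mob X ((m t)\<^sup>2))" using t r lam1 by (simp add: f_def norm_mult)
    also have "\<dots> < 1 * 1" using r mob_norm_lt1[OF X1 m21[OF t(1)]] by (intro mult_strict_mono) auto
    finally show "y \<in> ball 0 1" by simp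
  qed
  have gb: "g ` ball 0 1 \<subseteq> ball 0 1"
  proof
    fix y assume "y \<in> g ` ball 0 1"
    then obtain t where t: "norm t < 1" "y = g t" by auto
    have "norm y \<le> norm (\<epsilon> / 2) + norm (m t * of_real q * K ((m t)\<^sup>2))"
      unfolding t g_def by (rule norm_triangle_ineq)
    also have "norm (m t * of_real q * K ((m t)\<^sup>2)) = norm (m t) * q * norm (K ((m t)\<^sup>2))"
      using q(2) by (simp add: norm_mult)
    also have "norm (m t) * q * norm (K ((m t)\<^sup>2)) < 1 * q * 1"
    proof -
      have "norm (m t) * norm (K ((m t)\<^sup>2)) < 1 * 1"
        using m1[OF t(1)] K1[OF m21[OF t(1)]] by (intro mult_strict_mono) auto
      then show ?thesis using q(2) by (simp add: mult.commute mult.left_commute)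
    qed
    finally have "norm y < norm \<epsilon> / 2 + q" by simp
    then show "y \<in> ball 0 1" using q by simp
  qed
  have dm: "disc_map f g" using holf holg fb gb by (simp add: disc_map_def)
  define z1 where "z1 = mob (-\<beta>) u"
  define z4 where "z4 = mob (-\<beta>) (-u)"
  define z2 where "z2 = mob (-\<beta>) v"
  define z3 where "z3 = mob (-\<beta>) (-v)"
  have mb1: "norm (-\<beta>) < 1" using b1 by simp
  have mu1: "norm (-u) < 1" using u by simp
  have mv1: "norm (-v) < 1" using v1 by simp
  have z1b: "norm z1 < 1" using mob_norm_lt1[OF mb1 u(1)] by (simp add: z1_def)
  have z4b: "norm z4 < 1" using mob_norm_lt1[OF mb1 mu1] by (simp add: z4_def)
  have z2b: "norm z2 < 1" using mob_norm_lt1[OF mb1 v1] by (simp add: z2_def)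
  have z3b: "norm z3 < 1" using mob_norm_lt1[OF mb1 mv1] by (simp add: z3_def)
  have mz1: "m z1 = u" using mob_inv1[OF b1 u(1)] by (simp add: m_def z1_def)
  have mz4: "m z4 = -u" using mob_inv1[OF b1 mu1] by (simp add: m_def z4_def)
  have mz2: "m z2 = v" using mob_inv1[OF b1 v1] by (simp add: m_def z2_def)
  have mz3: "m z3 = -v" using mob_inv1[OF b1 mv1] by (simp add: m_def z3_def)
  have m0: "m 0 = - \<beta>" by (simp add: m_def)
  have rl: "of_real r * lam * (a' / lam) = of_real r * a'" using lam0 by simp
  have f0: "f 0 = 0" using \<beta>(1) by (simp add: f_def m0)
  have fz1: "f z1 = r * a'" using mXs rl by (simp add: f_def mz1 s_def)
  have fz4: "f z4 = r * a'" using mXs rl by (simp add: f_def mz4 s_def)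
  have fz2: "f z2 = - (r * a')" using mXv lam0 v(1) by (simp add: f_def mz2 \<nu>_def)
  have fz3: "f z3 = - (r * a')" using mXv lam0 v(1) by (simp add: f_def mz3 \<nu>_def)
  have kX_eq: "k X = kX" by (simp add: k_def)
  have KX: "K X = VX"
  proof -
    have "mob vsq X * kX = mob Vv VX" using mvX0 by (simp add: kX(1))
    then show ?thesis using mob_inv2[OF Vv(2) VX(2)] by (simp add: K_def kX_eq)
  qed
  have ks: "k s = ku"
  proof -
    have "mob X s * \<tau> = mob kX ku" using mXs0 by (simp add: \<tau>(1) s_def)
    then show ?thesis using mob_inv2[OF kX(2) ku(2)] by (simp add: k_def)
  qed
  have Ks: "K s = Vu"
  proof -
    have "mob vsq s * ku = mob Vv Vu" using mvs0 by (simp add: ku(1) s_def)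
    then show ?thesis using mob_inv2[OF Vv(2) Vu(2)] by (simp add: K_def ks)
  qed
  have Kv: "K vsq = Vv" by (simp add: K_def)
  have q0: "of_real q \<noteq> (0::complex)" using q(2) by simp
  have g0: "g 0 = \<gamma>"
  proof -
    have "g 0 = \<epsilon> / 2 - \<beta> * of_real q * VX" using \<beta>(1) KX by (simp add: g_def m0)
    also have "\<dots> = \<gamma>" using \<beta>(2) q0 by (simp add: VX(1) field_simps)
    finally show ?thesis .
  qed
  have gz1: "g z1 = 0"
  proof -
    have "g z1 = \<epsilon> / 2 + u * of_real q * Vu" using Ks by (simp add: g_def mz1 s_def)
    also have "\<dots> = 0" using u(2) q0 by (simp add: Vu(1) field_simps)
    finally show ?thesis .
  qed
  have gz4: "g z4 = \<epsilon>"
  proof -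
    have "g z4 = \<epsilon> / 2 - u * of_real q * Vu" using Ks by (simp add: g_def mz4 s_def)
    also have "\<dots> = \<epsilon>" using u(2) q0 by (simp add: Vu(1) field_simps)
    finally show ?thesis .
  qed
  have gz2: "g z2 = 0"
  proof -
    have "g z2 = \<epsilon> / 2 + v * of_real q * Vv" using Kv v(1) by (simp add: g_def mz2)
    also have "\<dots> = 0" using v(2) q0 by (simp add: Vv(1) field_simps)
    finally show ?thesis .
  qed
  have gz3: "g z3 = \<epsilon>"
  proof -
    have "g z3 = \<epsilon> / 2 - v * of_real q * Vv" using Kv v(1) by (simp add: g_def mz3)
    also have "\<dots> = \<epsilon>" using v(2) q0 by (simp add: Vv(1) field_simps)
    finally show ?thesis .
  qed
  have p14: "z1 * z4 = - mob X s" using mob_prod_pm[OF b1 u(1)] \<beta>(1) by (simp add: z1_def z4_def s_def)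
  have p23: "z2 * z3 = - mob X vsq" using mob_prod_pm[OF b1 v1] \<beta>(1) v(1) by (simp add: z2_def z3_def)
  have n14: "norm z1 * norm z4 = norm a'" using p14 nXs by (metis norm_minus_cancel norm_mult)
  have n23: "norm z2 * norm z3 = norm a'" using p23 mXv n\<nu> by (metis norm_minus_cancel norm_mult)
  have a0: "norm a' > 0" using a1 by simp
  have nz: "z1 \<noteq> 0" "z2 \<noteq> 0" "z3 \<noteq> 0" "z4 \<noteq> 0" using n14 n23 a0 by auto
  have sumeq: "sum_list (map logabs [z1, z2, z3, z4]) = ereal (2 * ln (norm a'))"
  proof -
    have "ln (norm z1) + ln (norm z2) + ln (norm z3) + ln (norm z4)
          = ln (norm z1 * norm z4) + ln (norm z2 * norm z3)" using nz by (simp add: ln_mult)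
    also have "\<dots> = 2 * ln (norm a')" using n14 n23 by simp
    finally show ?thesis using nz by (simp add: logabs_nz add.assoc)
  qed
  define zs where "zs = [z1, z2, z3, z4]"
  define ps where "ps = [(r * a', 0), (- (r * a'), 0), (- (r * a'), \<epsilon>), (r * a', \<epsilon>)]"
  have allj: "\<forall>j < length ps. zs ! j \<in> ball 0 1 \<and> (f (zs ! j), g (zs ! j)) = ps ! j"
  proof (intro allI impI)
    fix j assume "j < length ps"
    then have "j = 0 \<or> j = 1 \<or> j = 2 \<or> j = 3" by (auto simp: ps_def)
    then show "zs ! j \<in> ball 0 1 \<and> (f (zs ! j), g (zs ! j)) = ps ! j"
      using z1b z2b z3b z4b fz1 fz2 fz3 fz4 gz1 gz2 gz3 gz4
      by (auto simp: zs_def ps_def)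
  qed
  have mem: "sum_list (map logabs zs) \<in> {sum_list (map logabs zs) | f g zs.
      disc_map f g \<and> (f 0, g 0) = (0, \<gamma>) \<and> length zs = length ps \<and>
      (\<forall>j < length ps. zs ! j \<in> ball 0 1 \<and> (f (zs ! j), g (zs ! j)) = ps ! j)}"
    apply (rule CollectI, rule exI[of _ f], rule exI[of _ g], rule exI[of _ zs])
    using dm f0 g0 allj by (simp add: zs_def ps_def)
  have "coman_lempert ps (0, \<gamma>) \<le> sum_list (map logabs zs)"
    unfolding coman_lempert_def by (rule Inf_lower[OF mem])
  then show ?thesis using sumeq by (simp add: zs_def ps_def)
qed



lemma tendsto_mob:
  assumes "(w \<longlongrightarrow> w0) F" "(z \<longlongrightarrow> z0) F" "1 - cnj w0 * z0 \<noteq> 0"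
  shows "((\<lambda>x. mob (w x) (z x)) \<longlongrightarrow> mob w0 z0) F"
  unfolding mob_def by (intro tendsto_intros assms)

lemma tendsto_csqrt1:
  assumes "(h \<longlongrightarrow> 1) F"
  shows "((\<lambda>x. csqrt (h x)) \<longlongrightarrow> 1) F"
proof -
  have "isCont csqrt 1"
    by (rule continuous_at_csqrt) (simp add: complex_nonpos_Reals_iff)
  from isCont_tendsto_compose[OF this assms] show ?thesis by simp
qed

lemma ev_norm_lt:
  assumes "(h \<longlongrightarrow> L) F" "norm L < c"
  shows "\<forall>\<^sub>F x in F. norm (h x) < c"
  using order_tendstoD(2)[OF tendsto_norm[OF assms(1)] assms(2)] .

lemma ev_ne0:
  fixes h :: "'a \<Rightarrow> 'b::real_normed_vector"
  assumes "(h \<longlongrightarrow> L) F" "L \<noteq> 0"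
  shows "\<forall>\<^sub>F x in F. h x \<noteq> 0"
proof -
  have "0 < norm L" using assms(2) by simp
  from order_tendstoD(1)[OF tendsto_norm[OF assms(1)] this]
  have "\<forall>\<^sub>F x in F. 0 < norm (h x)" .
  then show ?thesis by (rule eventually_mono) auto
qed

lemma upper_eventually:
  fixes a \<gamma> :: complex and r :: real
  assumes a0: "a \<noteq> 0" and r: "norm a < r" "r < 1" and g0: "\<gamma> \<noteq> 0"
    and G: "norm \<gamma> < (norm a / r) * sqrt (norm a / r)"
  shows "\<forall>\<^sub>F \<epsilon> in at 0. coman_lempert [(a, 0), (-a, 0), (-a, \<epsilon>), (a, \<epsilon>)] (0, \<gamma>)
            \<le> ereal (2 * ln (norm a / r))"
proof -
  have r0: "0 < r" using r a0 by (meson norm_ge_zero le_less_trans)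
  define a' where "a' = a / of_real r"
  define A where "A = norm a / r"
  have nA: "norm a' = A" using r0 by (simp add: a'_def A_def norm_divide)
  have A: "0 < A" "A < 1" using r0 r a0 by (auto simp: A_def)
  have a'1: "norm a' < 1" and a'0: "a' \<noteq> 0" using nA A by auto
  have aa: "a = of_real r * a'" using r0 by (simp add: a'_def)
  have ma'1: "norm (-a') < 1" using a'1 by simp
  define \<beta>0 where "\<beta>0 = csqrt (- a')"
  have b0sq: "\<beta>0\<^sup>2 = - a'" by (simp add: \<beta>0_def)
  have b00: "\<beta>0 \<noteq> 0" using a'0 b0sq by auto
  have nb0: "norm \<beta>0 = sqrt A" using nA by (simp add: \<beta>0_def)
  define W0 where "W0 = mob a' (-a')"
  have W01: "norm W0 < 1" using mob_norm_lt1[OF a'1 ma'1] by (simp add: W0_def)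
  have mW0: "mob (-a') W0 = - a'" using mob_inv2[OF a'1 ma'1] by (simp add: W0_def)
  have nmW0: "norm (mob W0 (-a')) = A" using mob_norm_sym[of W0 "-a'"] mW0 nA by simp
  have W00: "W0 \<noteq> 0" using mW0 a'0 by auto
  define v0 where "v0 = csqrt W0"
  have v0sq: "v0\<^sup>2 = W0" by (simp add: v0_def)
  have v00: "v0 \<noteq> 0" using W00 v0sq by auto
  define kX0 where "kX0 = (- \<gamma> / \<beta>0) / mob W0 (- a')"
  have nkX0: "norm kX0 = norm \<gamma> / sqrt A / A" using nb0 nmW0 by (simp add: kX0_def norm_divide norm_mult)
  have sA: "0 < sqrt A" "sqrt A < 1" using A by auto
  have kX01: "norm kX0 < 1"
  proof -
    have "norm \<gamma> < A * sqrt A" using G by (simp add: A_def)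
    then have "norm \<gamma> / sqrt A / A < 1" using A sA by (simp add: field_simps)
    then show ?thesis using nkX0 by simp
  qed
  have kX00: "kX0 \<noteq> 0" using g0 b00 nmW0 A by (auto simp: kX0_def)
  have VX01: "norm (- \<gamma> / \<beta>0) < 1"
  proof -
    have "norm \<gamma> < A * sqrt A" using G by (simp add: A_def)
    also have "\<dots> < sqrt A" using A sA by simp
    finally show ?thesis using nb0 sA by (simp add: norm_divide)
  qed
  define C0 where "C0 = 1 / (2 * W0 * kX0)"
  have C00: "C0 \<noteq> 0" using W00 kX00 by (simp add: C0_def)
  have Vu0eq: "- 1 / (2 * C0) = - (W0 * kX0)" using W00 kX00 by (simp add: C0_def)
  have Vu01: "norm (- 1 / (2 * C0)) < 1"
    unfolding Vu0eq using norm_lt1_mult[OF W01 less_imp_le[OF kX01]] by simp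
  have ku0: "(- 1 / (2 * C0)) / (- W0) = kX0" using W00 kX00 by (simp add: C0_def)
  define u where "u = (\<lambda>\<epsilon>::complex. C0 * \<epsilon>)"
  define s where "s = (\<lambda>\<epsilon>. (u \<epsilon>)\<^sup>2)"
  define X where "X = (\<lambda>\<epsilon>. mob (-(s \<epsilon>)) (-a'))"
  define \<beta> where "\<beta> = (\<lambda>\<epsilon>. \<beta>0 * csqrt (X \<epsilon> / \<beta>0\<^sup>2))"
  define lam where "lam = (\<lambda>\<epsilon>. a' / mob (X \<epsilon>) (s \<epsilon>))"
  define vsq where "vsq = (\<lambda>\<epsilon>. mob (-(X \<epsilon>)) (-a' / lam \<epsilon>))"
  define v where "v = (\<lambda>\<epsilon>. v0 * csqrt (vsq \<epsilon> / v0\<^sup>2))"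
  define q where "q = (\<lambda>\<epsilon>::complex. 1 - norm \<epsilon> / 2)"
  define Vu where "Vu = (\<lambda>\<epsilon>. - 1 / (2 * C0 * of_real (q \<epsilon>)))"
  define Vv where "Vv = (\<lambda>\<epsilon>. - \<epsilon> / (2 * v \<epsilon> * of_real (q \<epsilon>)))"
  define VX where "VX = (\<lambda>\<epsilon>. (\<epsilon> / 2 - \<gamma>) / (\<beta> \<epsilon> * of_real (q \<epsilon>)))"
  define kX where "kX = (\<lambda>\<epsilon>. mob (Vv \<epsilon>) (VX \<epsilon>) / mob (vsq \<epsilon>) (X \<epsilon>))"
  define ku where "ku = (\<lambda>\<epsilon>. mob (Vv \<epsilon>) (Vu \<epsilon>) / mob (vsq \<epsilon>) (s \<epsilon>))"
  define \<tau> where "\<tau> = (\<lambda>\<epsilon>. mob (kX \<epsilon>) (ku \<epsilon>) / mob (X \<epsilon>) (s \<epsilon>))"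
  let ?F = "at (0::complex)"
  have Lu: "(u \<longlongrightarrow> 0) ?F"
  proof -
    have "((\<lambda>\<epsilon>. C0 * \<epsilon>) \<longlongrightarrow> C0 * 0) ?F" by (intro tendsto_intros)
    then show ?thesis by (simp add: u_def)
  qed
  have Ls: "(s \<longlongrightarrow> 0) ?F"
  proof -
    have "((\<lambda>\<epsilon>. (u \<epsilon>)\<^sup>2) \<longlongrightarrow> 0\<^sup>2) ?F" by (intro tendsto_intros Lu)
    then show ?thesis by (simp add: s_def)
  qed
  have LX: "(X \<longlongrightarrow> - a') ?F"
  proof -
    have "(X \<longlongrightarrow> mob (-0) (-a')) ?F"
      unfolding X_def by (intro tendsto_mob tendsto_intros Ls) auto
    then show ?thesis by simp
  qed
  have Lb: "(\<beta> \<longlongrightarrow> \<beta>0) ?F"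
  proof -
    have "((\<lambda>\<epsilon>. X \<epsilon> / \<beta>0\<^sup>2) \<longlongrightarrow> (- a') / \<beta>0\<^sup>2) ?F" by (intro tendsto_intros LX) (use b00 in auto)
    then have "((\<lambda>\<epsilon>. X \<epsilon> / \<beta>0\<^sup>2) \<longlongrightarrow> 1) ?F" using b0sq a'0 by simp
    from tendsto_csqrt1[OF this] have "((\<lambda>\<epsilon>. \<beta>0 * csqrt (X \<epsilon> / \<beta>0\<^sup>2)) \<longlongrightarrow> \<beta>0 * 1) ?F"
      by (intro tendsto_intros)
    then show ?thesis by (simp add: \<beta>_def)
  qed
  have LmXs: "((\<lambda>\<epsilon>. mob (X \<epsilon>) (s \<epsilon>)) \<longlongrightarrow> a') ?F"
  proof -
    have "((\<lambda>\<epsilon>. mob (X \<epsilon>) (s \<epsilon>)) \<longlongrightarrow> mob (-a') 0) ?F" by (intro tendsto_mob LX Ls) auto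
    then show ?thesis by simp
  qed
  have Llam: "(lam \<longlongrightarrow> 1) ?F"
  proof -
    have "(lam \<longlongrightarrow> a' / a') ?F" unfolding lam_def by (intro tendsto_intros LmXs a'0)
    then show ?thesis using a'0 by simp
  qed
  have Lvsq: "(vsq \<longlongrightarrow> W0) ?F"
  proof -
    have "(vsq \<longlongrightarrow> mob (- (- a')) (- a' / 1)) ?F"
      unfolding vsq_def
    proof (intro tendsto_mob tendsto_intros LX Llam)
      have "1 - cnj (- (- a')) * (- a' / 1) = 1 + (norm a')\<^sup>2"
        using complex_norm_square[of a'] by (simp add: mult.commute)
      then show "1 - cnj (- (- a')) * (- a' / 1) \<noteq> 0"
        by (metis add_nonneg_eq_0_iff of_real_1 of_real_add of_real_eq_0_iff zero_le_one zero_le_power2 zero_neq_one)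
    qed auto
    then show ?thesis by (simp add: W0_def)
  qed
  have Lv: "(v \<longlongrightarrow> v0) ?F"
  proof -
    have "((\<lambda>\<epsilon>. vsq \<epsilon> / v0\<^sup>2) \<longlongrightarrow> W0 / v0\<^sup>2) ?F" by (intro tendsto_intros Lvsq) (use v00 in auto)
    then have "((\<lambda>\<epsilon>. vsq \<epsilon> / v0\<^sup>2) \<longlongrightarrow> 1) ?F" using v0sq W00 by simp
    from tendsto_csqrt1[OF this] have "((\<lambda>\<epsilon>. v0 * csqrt (vsq \<epsilon> / v0\<^sup>2)) \<longlongrightarrow> v0 * 1) ?F"
      by (intro tendsto_intros)
    then show ?thesis by (simp add: v_def)
  qed
  have Lq: "((\<lambda>\<epsilon>. complex_of_real (q \<epsilon>)) \<longlongrightarrow> 1) ?F"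
  proof -
    have "((\<lambda>\<epsilon>. complex_of_real (q \<epsilon>)) \<longlongrightarrow> complex_of_real (1 - norm (0::complex) / 2)) ?F"
      unfolding q_def by (intro tendsto_intros) auto
    then show ?thesis by simp
  qed
  have Lqr: "(q \<longlongrightarrow> 1) ?F"
  proof -
    have "(q \<longlongrightarrow> 1 - norm (0::complex) / 2) ?F" unfolding q_def by (intro tendsto_intros) auto
    then show ?thesis by simp
  qed
  have LVu: "(Vu \<longlongrightarrow> - 1 / (2 * C0)) ?F"
  proof -
    have "(Vu \<longlongrightarrow> - 1 / (2 * C0 * 1)) ?F" unfolding Vu_def by (intro tendsto_intros Lq) (use C00 in auto)
    then show ?thesis by simp
  qed
  have LVv: "(Vv \<longlongrightarrow> 0) ?F"
  proof -
    have "(Vv \<longlongrightarrow> - 0 / (2 * v0 * 1)) ?F" unfolding Vv_def by (intro tendsto_intros Lq Lv) (use v00 in auto)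
    then show ?thesis by simp
  qed
  have LVX: "(VX \<longlongrightarrow> - \<gamma> / \<beta>0) ?F"
  proof -
    have "(VX \<longlongrightarrow> (0 / 2 - \<gamma>) / (\<beta>0 * 1)) ?F" unfolding VX_def by (intro tendsto_intros Lq Lb) (use b00 in auto)
    then show ?thesis by simp
  qed
  have LkX: "(kX \<longlongrightarrow> kX0) ?F"
  proof -
    have "(kX \<longlongrightarrow> mob 0 (- \<gamma> / \<beta>0) / mob W0 (- a')) ?F"
      unfolding kX_def by (intro tendsto_intros tendsto_mob LVv LVX Lvsq LX)
        (use nmW0 A mob_denom[OF W01 ma'1] in auto)
    then show ?thesis by (simp add: kX0_def)
  qed
  have Lku: "(ku \<longlongrightarrow> kX0) ?F"
  proof -
    have "(ku \<longlongrightarrow> mob 0 (- 1 / (2 * C0)) / mob W0 0) ?F"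
      unfolding ku_def by (intro tendsto_intros tendsto_mob LVv LVu Lvsq Ls) (use W00 in auto)
    then show ?thesis using ku0 by simp
  qed
  have Ltau: "(\<tau> \<longlongrightarrow> 0) ?F"
  proof -
    have "(\<tau> \<longlongrightarrow> mob kX0 kX0 / a') ?F"
      unfolding \<tau>_def by (intro tendsto_intros tendsto_mob LkX Lku LmXs a'0)
        (use mob_denom[OF kX01 kX01] in auto)
    then show ?thesis by simp
  qed
  have E1: "\<forall>\<^sub>F \<epsilon> in ?F. \<epsilon> \<noteq> 0" by (simp add: eventually_at_filter)
  have E2: "\<forall>\<^sub>F \<epsilon> in ?F. norm (u \<epsilon>) < 1" using ev_norm_lt[OF Lu] by simp
  have E3: "\<forall>\<^sub>F \<epsilon> in ?F. \<beta> \<epsilon> \<noteq> 0" using ev_ne0[OF Lb b00] .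
  have E4: "\<forall>\<^sub>F \<epsilon> in ?F. v \<epsilon> \<noteq> 0" using ev_ne0[OF Lv v00] .
  have E5: "\<forall>\<^sub>F \<epsilon> in ?F. 0 < q \<epsilon>" using order_tendstoD(1)[OF Lqr] by simp
  have E6: "\<forall>\<^sub>F \<epsilon> in ?F. norm (Vu \<epsilon>) < 1" using ev_norm_lt[OF LVu Vu01] .
  have E7: "\<forall>\<^sub>F \<epsilon> in ?F. norm (Vv \<epsilon>) < 1" using ev_norm_lt[OF LVv] by simp
  have E8: "\<forall>\<^sub>F \<epsilon> in ?F. norm (VX \<epsilon>) < 1" using ev_norm_lt[OF LVX VX01] .
  have E9: "\<forall>\<^sub>F \<epsilon> in ?F. norm (kX \<epsilon>) < 1" using ev_norm_lt[OF LkX kX01] .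
  have E10: "\<forall>\<^sub>F \<epsilon> in ?F. norm (ku \<epsilon>) < 1" using ev_norm_lt[OF Lku kX01] .
  have E11: "\<forall>\<^sub>F \<epsilon> in ?F. norm (\<tau> \<epsilon>) < 1" using ev_norm_lt[OF Ltau] by simp
  show ?thesis
    using E1 E2 E3 E4 E5 E6 E7 E8 E9 E10 E11
  proof eventually_elim
    case (elim \<epsilon>)
    have u0: "u \<epsilon> \<noteq> 0" using elim(1) C00 by (simp add: u_def)
    have bsq: "(\<beta> \<epsilon>)\<^sup>2 = X \<epsilon>" using b00 by (simp add: \<beta>_def power_mult_distrib)
    have vsq': "(v \<epsilon>)\<^sup>2 = vsq \<epsilon>" using v00 by (simp add: v_def power_mult_distrib)
    have q': "q \<epsilon> = 1 - norm \<epsilon> / 2" by (simp add: q_def)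
    have Vu': "Vu \<epsilon> = - \<epsilon> / (2 * u \<epsilon> * of_real (q \<epsilon>))"
      using elim(1) by (simp add: Vu_def u_def)
    have Xe: "X \<epsilon> = mob (-((u \<epsilon>)\<^sup>2)) (-a')" by (simp add: X_def s_def)
    have lame: "lam \<epsilon> = a' / mob (X \<epsilon>) ((u \<epsilon>)\<^sup>2)" by (simp add: lam_def s_def)
    have vsqe: "vsq \<epsilon> = mob (-(X \<epsilon>)) (-a' / lam \<epsilon>)" by (simp add: vsq_def)
    have Vve: "Vv \<epsilon> = - \<epsilon> / (2 * v \<epsilon> * of_real (q \<epsilon>))" by (simp add: Vv_def)
    have VXe: "VX \<epsilon> = (\<epsilon> / 2 - \<gamma>) / (\<beta> \<epsilon> * of_real (q \<epsilon>))" by (simp add: VX_def)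
    have kXe: "kX \<epsilon> = mob (Vv \<epsilon>) (VX \<epsilon>) / mob (vsq \<epsilon>) (X \<epsilon>)" by (simp add: kX_def)
    have kue: "ku \<epsilon> = mob (Vv \<epsilon>) (Vu \<epsilon>) / mob (vsq \<epsilon>) ((u \<epsilon>)\<^sup>2)" by (simp add: ku_def s_def)
    have taue: "\<tau> \<epsilon> = mob (kX \<epsilon>) (ku \<epsilon>) / mob (X \<epsilon>) ((u \<epsilon>)\<^sup>2)" by (simp add: \<tau>_def s_def)
    have "coman_lempert [(of_real r * a', 0), (- (of_real r * a'), 0), (- (of_real r * a'), \<epsilon>),
            (of_real r * a', \<epsilon>)] (0, \<gamma>) \<le> ereal (2 * ln (norm a'))"
      by (rule construction[OF a'1 a'0 r0 r(2) elim(2) u0 Xe bsq elim(3)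
            lame vsqe vsq' elim(4) q' elim(5) Vu' elim(6)
            Vve elim(7) VXe elim(8) kXe elim(9) kue elim(10)
            taue less_imp_le[OF elim(11)]])
    then show ?case using aa nA by (simp add: A_def)
  qed
qed



lemma kap1_gt1: "0 < C \<Longrightarrow> C < 1 \<Longrightarrow> 1 < kap1 C"
proof -
  assume C: "0 < C" "C < 1"
  define T where "T = (1 + C) / 2"
  define d where "d = (1 - T) * (1 - T\<^sup>2) * (1 - sqrt C) / 16"
  have T: "0 < T" "T < 1" "C < T" using C by (auto simp: T_def)
  have T2: "T\<^sup>2 < 1" using T by (simp add: abs_square_less_1)
  have sC: "sqrt C < 1" using C by simp
  have d0: "0 < d" using T T2 sC by (simp add: d_def)
  have "(1 - T) * (1 - T\<^sup>2) * (1 - sqrt C) \<le> 1 * 1 * 1"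
    using T T2 sC C by (intro mult_mono) (auto simp: mult_le_one)
  then have d1: "d < 1" unfolding d_def by (intro div16) simp
  have "1 < T / C" using T C by simp
  moreover have "1 < 1 / (1 - d)" using d0 d1 by simp
  ultimately show ?thesis by (simp add: kap1_def T_def[symmetric] d_def[symmetric])
qed

lemma kap2_gt1: "0 < C \<Longrightarrow> C < 1 \<Longrightarrow> 1 < kap2 C"
proof -
  assume C: "0 < C" "C < 1"
  define T where "T = (1 + C) / 2"
  define d where "d = (1 - T) ^ 3 / 20"
  have T: "0 < T" "T < 1" "C < T" using C by (auto simp: T_def)
  have d0: "0 < d" using T by (simp add: d_def)
  have "(1 - T) ^ 3 \<le> 1 ^ 3" using T by (intro power_mono) auto
  then have d1: "d < 1" by (simp add: d_def)
  have "1 < T / C" using T C by simp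
  moreover have "1 < 1 / (1 - d)" using d0 d1 by simp
  ultimately show ?thesis by (simp add: kap2_def T_def[symmetric] d_def[symmetric])
qed

theorem mainTheorem18:
  fixes a b \<gamma> :: complex
  assumes "a \<in> ball 0 1"
    and "b = - a"
    and "(cmod a)\<^sup>2 < cmod \<gamma>"
    and "cmod \<gamma> \<le> cmod a powr (3/2)"
  shows "Limsup (at (0::complex))
           (\<lambda>\<epsilon>. coman_lempert [(a, 0), (b, 0), (b, \<epsilon>), (a, \<epsilon>)] (0, \<gamma>))
         < min (min (L_a0b0 a b (0, \<gamma>)) (L_aVb0 a b (0, \<gamma>)))
               (min (L_a0bV a b (0, \<gamma>)) (L_aVbV a b (0, \<gamma>)))"
proof -
  define C where "C = norm a"
  define G where "G = norm \<gamma>"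
  have C1: "C < 1" using assms(1) by (simp add: C_def)
  have a0: "a \<noteq> 0"
  proof
    assume "a = 0"
    then show False using assms(3) assms(4) by simp
  qed
  have C0: "0 < C" using a0 by (simp add: C_def)
  have GC: "C\<^sup>2 < G" using assms(3) by (simp add: C_def G_def)
  have G0: "0 < G" using GC C0 by (meson less_trans zero_less_power)
  have g0: "\<gamma> \<noteq> 0" using G0 by (auto simp: G_def)
  have Cp: "C powr (3/2) = C * sqrt C"
  proof -
    have "C powr (3/2) = C powr (1 + 1/2)" by simp
    also have "\<dots> = C powr 1 * C powr (1/2)" by (rule powr_add)
    also have "\<dots> = C * sqrt C" using C0 by (simp add: powr_half_sqrt)
    finally show ?thesis .
  qed
  have GCs: "G \<le> C * sqrt C" using assms(4) Cp by (simp add: C_def G_def)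
  define \<kappa> where "\<kappa> = min (G / C\<^sup>2) (min (kap1 C) (kap2 C))"
  have k1: "1 < \<kappa>"
    using kap1_gt1[OF C0 C1] kap2_gt1[OF C0 C1] GC C0 by (simp add: \<kappa>_def)
  define r where "r = (max C (1 / sqrt \<kappa>) + 1) / 2"
  have sk: "1 < sqrt \<kappa>" using k1 by simp
  have isk: "1 / sqrt \<kappa> < 1" "0 < 1 / sqrt \<kappa>" using sk by auto
  define mm where "mm = max C (1 / sqrt \<kappa>)"
  have mm: "mm < 1" "C \<le> mm" "1 / sqrt \<kappa> \<le> mm" using C1 isk by (auto simp: mm_def)
  have rm: "r = (mm + 1) / 2" by (simp add: r_def mm_def)
  have r1a: "C < r" using mm(1,2) unfolding rm by (simp add: field_simps)
  have r1b: "r < 1" using mm(1) unfolding rm by (simp add: field_simps)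
  have r1c: "1 / sqrt \<kappa> < r" using mm(1,3) unfolding rm by (simp add: field_simps)
  note r1 = r1a r1b r1c
  have r0: "0 < r" using r1 C0 by linarith
  have rk: "1 < r\<^sup>2 * \<kappa>"
  proof -
    have "1 / sqrt \<kappa> * sqrt \<kappa> < r * sqrt \<kappa>" using r1 sk by (intro mult_strict_right_mono) auto
    then have "1 < r * sqrt \<kappa>" using sk by simp
    then have "1\<^sup>2 < (r * sqrt \<kappa>)\<^sup>2" using r0 sk by (intro power_strict_mono) auto
    then show ?thesis using k1 by (simp add: power_mult_distrib)
  qed
  define A where "A = C / r"
  have A: "C < A" "A < 1" using r1 r0 C0 by (auto simp: A_def field_simps)
  have GA: "G < A * sqrt A"
  proof -
    have "C * sqrt C < A * sqrt A" using A C0 by (intro mult_strict_mono) auto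
    then show ?thesis using GCs by simp
  qed
  have ev: "\<forall>\<^sub>F \<epsilon> in at 0. coman_lempert [(a, 0), (- a, 0), (- a, \<epsilon>), (a, \<epsilon>)] (0, \<gamma>)
            \<le> ereal (2 * ln (norm a / r))"
    by (rule upper_eventually[OF a0 _ r1(2) g0]) (use r1 GA in \<open>simp_all add: A_def C_def G_def\<close>)
  have up: "Limsup (at (0::complex)) (\<lambda>\<epsilon>. coman_lempert [(a, 0), (b, 0), (b, \<epsilon>), (a, \<epsilon>)] (0, \<gamma>))
            \<le> ereal (2 * ln (C / r))"
    by (rule Limsup_bounded) (use ev assms(2) in \<open>simp add: C_def\<close>)
  have pos: "0 < C\<^sup>2 * \<kappa>" using C0 k1 by simp
  have gap: "2 * ln (C / r) < ln (C\<^sup>2 * \<kappa>)"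
  proof -
    have "2 * ln (C / r) = ln ((C / r)\<^sup>2)" using C0 r0 by (simp add: ln_realpow)
    also have "\<dots> < ln (C\<^sup>2 * \<kappa>)"
    proof -
      have "(C / r)\<^sup>2 < C\<^sup>2 * \<kappa>"
      proof -
        have "C\<^sup>2 * 1 < C\<^sup>2 * (r\<^sup>2 * \<kappa>)" using rk C0 by (intro mult_strict_left_mono) auto
        then show ?thesis using r0 by (simp add: power_divide field_simps)
      qed
      then show ?thesis using C0 r0 pos by simp
    qed
    finally show ?thesis .
  qed
  have lnk: "ln (C\<^sup>2 * \<kappa>) \<le> ln (C\<^sup>2 * x)" if "\<kappa> \<le> x" for x
  proof -
    have "C\<^sup>2 * \<kappa> \<le> C\<^sup>2 * x" using that by (intro mult_left_mono) auto
    then show ?thesis using pos by simp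
  qed
  have l1: "ereal (ln (C\<^sup>2 * \<kappa>)) \<le> L_a0b0 a b (0, \<gamma>)"
  proof -
    have "C\<^sup>2 * \<kappa> \<le> C\<^sup>2 * (G / C\<^sup>2)" using C0 by (intro mult_left_mono) (auto simp: \<kappa>_def)
    then have "ln (C\<^sup>2 * \<kappa>) \<le> ln G" using pos C0 by simp
    then have "ereal (ln (C\<^sup>2 * \<kappa>)) \<le> ereal (ln (norm \<gamma>))" by (simp add: G_def)
    also have "\<dots> \<le> L_a0b0 a b (0, \<gamma>)" by (rule L_a0b0_ge[OF a0 assms(2) g0])
    finally show ?thesis .
  qed
  have a1: "norm a < 1" using C1 by (simp add: C_def)
  have kk1: "\<kappa> \<le> kap1 C" "\<kappa> \<le> kap2 C" by (simp_all add: \<kappa>_def)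
  have l2: "ereal (ln (C\<^sup>2 * \<kappa>)) \<le> L_aVb0 a b (0, \<gamma>)"
  proof -
    have "ereal (ln (C\<^sup>2 * \<kappa>)) \<le> ereal (ln (C\<^sup>2 * kap1 C))" using lnk[OF kk1(1)] by simp
    also have "\<dots> \<le> L_aVb0 a b (0, \<gamma>)" unfolding C_def by (rule L_aVb0_ge[OF a0 a1 assms(2)])
    finally show ?thesis .
  qed
  have l3: "ereal (ln (C\<^sup>2 * \<kappa>)) \<le> L_a0bV a b (0, \<gamma>)"
  proof -
    have "ereal (ln (C\<^sup>2 * \<kappa>)) \<le> ereal (ln (C\<^sup>2 * kap1 C))" using lnk[OF kk1(1)] by simp
    also have "\<dots> \<le> L_a0bV a b (0, \<gamma>)" unfolding C_def by (rule L_a0bV_ge[OF a0 a1 assms(2)])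
    finally show ?thesis .
  qed
  have l4: "ereal (ln (C\<^sup>2 * \<kappa>)) \<le> L_aVbV a b (0, \<gamma>)"
  proof -
    have "ereal (ln (C\<^sup>2 * \<kappa>)) \<le> ereal (ln (C\<^sup>2 * kap2 C))" using lnk[OF kk1(2)] by simp
    also have "\<dots> \<le> L_aVbV a b (0, \<gamma>)" unfolding C_def by (rule L_aVbV_ge[OF a0 a1 assms(2)])
    finally show ?thesis .
  qed
  have low: "ereal (ln (C\<^sup>2 * \<kappa>)) \<le> min (min (L_a0b0 a b (0, \<gamma>)) (L_aVb0 a b (0, \<gamma>)))
               (min (L_a0bV a b (0, \<gamma>)) (L_aVbV a b (0, \<gamma>)))"
    using l1 l2 l3 l4 by simp
  have "ereal (2 * ln (C / r)) < ereal (ln (C\<^sup>2 * \<kappa>))" using gap by simp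
  with up have "Limsup (at (0::complex)) (\<lambda>\<epsilon>. coman_lempert [(a, 0), (b, 0), (b, \<epsilon>), (a, \<epsilon>)] (0, \<gamma>))
      < ereal (ln (C\<^sup>2 * \<kappa>))" by (rule order.strict_trans1)
  then show ?thesis using low by (rule order.strict_trans2)
qed


end
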